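(* Suppose Assumption (H0) holds. Let $t\in[0,T]$ and $\mu=\sum_{i\in V}\delta_{(i,x_i)}\in E_d$. If $y\in\mathcal R(t,\mu)$ then $[y,\infty)\subseteq\mathcal R(t,\mu)$.
   Context: Labels $\mathcal I=\{\varnothing\}\cup\bigcup_{n\ge1}\mathbb N^n$ (finite words over $\mathbb N$), concatenation $ij$, $j\prec i$ iff $i=j\ell$ with $\ell\ne\varnothing$. $E_\ell$ is the set of measures $\sum_{i\in V}\delta_{(i,x_i)}$ on $\mathcal I\times\mathbb R^\ell$ with $V\subset\mathcal I$ finite, $x_i\in\mathbb R^\ell$, no $i,j\in V$ with $i\prec j$. On a complete filtered probability space $(\Omega,\mathcal F,\mathbb F,\mathbb P)$ over $[0,T]$ there are mutually independent $m$-dimensional Brownian motions $B^i$ and Poisson random measures $Q^i$ on $[0,T]\times\mathbb N$ with intensity $dt\,\gamma\sum_kp_k\delta_k$ ($\gamma>0$, $p_k\ge0$, $\sum p_k=1$), $i\in\mathcal I$. $A$ is a Polish space with bounded metric $d_A$; $\mathcal A$ is the set of families $\alpha=(\alpha^i)_{i\in\mathcal I}$ of $\mathbb F$-progressively measurable $A$-valued processes. Coefficients $\lambda:\mathbb R^d\times A\to\mathbb R^d$, $\sigma:\mathbb R^d\times A\to\mathbb R^{d\times m}$, $\lambda_Y:\mathbb R^d\times\mathbb R\times A\to\mathbb R$, $\sigma_Y:\mathbb R^d\times A\to\mathbb R^{1\times m}$ are measurable, and $g:\mathcal I\times\mathbb R^d\to\mathbb R$, $(i,x)\mapsto g_i(x)$.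 Branching system: for $t$, $\mu=\sum_{i\in V}\delta_{(i,x_i)}$, $\hat\mu=\sum_{i\in V}\delta_{(i,x_i,y_i)}\in E_{d+1}$, $\alpha\in\mathcal A$, the alive set is $\mathcal V^{t,\mu}_s=V$ for $s\le t$; a particle $i$ alive at $s\ge t$ dies at $\tau_i=\inf\{r>s:Q^i((s,r]\times\mathbb N)=1\}$ and, if $Q^i(\{\tau_i\}\times\{k\})=1$, is replaced by $i0,\dots,i(k-1)$. Positions $X^{t,\mu,\alpha,i}$, $Y^{t,\hat\mu,\alpha,i}$ equal $x_i,y_i$ for $s\le t$; offspring start at their parent's position at the branching time; while alive $dX^i_s=\lambda(X^i_s,\alpha^i_s)ds+\sigma(X^i_s,\alpha^i_s)dB^i_s$, $dY^i_s=\lambda_Y(X^i_s,Y^i_s,\alpha^i_s)ds+\sigma_Y(X^i_s,\alpha^i_s)dB^i_s$. Reachability set: $\mathcal R(t,\mu)=\{y\in\mathbb R:\exists\alpha\in\mathcal A,\ Y^{t,\hat\mu,\alpha,i}_T\ge g_i(X^{t,\mu,\alpha,i}_T)\ \forall i\in\mathcal V^{t,\mu}_T\ \text{a.s., with }\hat\mu=\sum_{i\in V}\delta_{(i,x_i,y)}\}$ (constraint vacuous if $\mathcal V^{t,\mu}_T=\emptyset$). Assumption (H0): (i) $\sum_kkp_k<\infty$; (ii) $\sup_a(|\lambda(0,a)|+|\sigma(0,a)|+|\lambda_Y(0,0,a)|+|\sigma_Y(0,a)|)<\infty$; (iii) there is $L$ with $|\lambda(x,a)-\lambda(x',a)|+|\sigma(x,a)-\sigma(x',a)|+|\lambda_Y(x,y,a)-\lambda_Y(x',y',a)|+|\sigma_Y(x,a)-\sigma_Y(x',a)|\le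 L(|x-x'|+|y-y'|)$; (iv) there is a nondecreasing $w$, $w(r)\to0$ as $r\to0$, with $|\lambda(x,a)-\lambda(x,a')|+|\sigma(x,a)-\sigma(x,a')|+|\lambda_Y(x,y,a)-\lambda_Y(x,y,a')|+|\sigma_Y(x,a)-\sigma_Y(x,a')|\le w(d_A(a,a'))$. *)

theory Defs
  imports "HOL-Probability.Probability"
begin

type_synonym label = "nat list"

definition lab_prec :: "label \<Rightarrow> label \<Rightarrow> bool" where
  "lab_prec j i \<longleftrightarrow> (\<exists>l. l \<noteq> [] \<and> i = j @ l)"

text \<open>A measure mu = sum over i in V of delta (i, x_i) in E is represented by the
  finite label set V together with the position map x (only its values on V matter).\<close>
definition in_E :: "label set \<Rightarrow> bool" where
  "in_E V \<longleftrightarrow> finite V \<and> (\<forall>i\<in>V. \<forall>j\<in>V. \<not> lab_prec i j)"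

definition complete_filtered_ps :: "'w measure \<Rightarrow> (real \<Rightarrow> 'w measure) \<Rightarrow> bool" where
  "complete_filtered_ps M F \<longleftrightarrow> prob_space M \<and>
     (\<forall>t. space (F t) = space M \<and> sets (F t) \<subseteq> sets M) \<and>
     (\<forall>s t. s \<le> t \<longrightarrow> sets (F s) \<subseteq> sets (F t)) \<and>
     (\<forall>A\<in>sets M. emeasure M A = 0 \<longrightarrow> (\<forall>N. N \<subseteq> A \<longrightarrow> N \<in> sets (F 0)))"

definition indep_of :: "'w measure \<Rightarrow> 'w set set \<Rightarrow> ('w \<Rightarrow> 'b) \<Rightarrow> 'b measure \<Rightarrow> bool" where
  "indep_of M G X N \<longleftrightarrow> X \<in> measurable M N \<and>
     (\<forall>A\<in>G. \<forall>C\<in>sets N. measure M (A \<inter> (X -` C \<inter> space M))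
                         = measure M A * measure M (X -` C \<inter> space M))"

definition brownian :: "'w measure \<Rightarrow> (real \<Rightarrow> 'w measure) \<Rightarrow> real \<Rightarrow> (real \<Rightarrow> 'w \<Rightarrow> real^'m) \<Rightarrow> bool" where
  "brownian M F T W \<longleftrightarrow>
     (\<forall>t\<in>{0..T}. W t \<in> borel_measurable (F t)) \<and>
     (AE \<omega> in M. W 0 \<omega> = 0 \<and> continuous_on {0..T} (\<lambda>t. W t \<omega>)) \<and>
     (\<forall>s t. 0 \<le> s \<and> s < t \<and> t \<le> T \<longrightarrow>
        distributed M lborel (\<lambda>\<omega>. W t \<omega> - W s \<omega>)
          (\<lambda>z. ennreal (\<Prod>j\<in>UNIV. normal_density 0 (sqrt (t - s)) (z $ j))) \<and>
        indep_of M (sets (F s)) (\<lambda>\<omega>. W t \<omega> - W s \<omega>) borel)"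

definition prm_intensity :: "real \<Rightarrow> (nat \<Rightarrow> real) \<Rightarrow> real \<Rightarrow> (real \<times> nat) set \<Rightarrow> real" where
  "prm_intensity \<gamma> p T S = \<gamma> * (\<Sum>k. p k * measure lborel {r\<in>{0..T}. (r, k) \<in> S})"

abbreviation time_mark_sets :: "(real \<times> nat) set set" where
  "time_mark_sets \<equiv> sets ((borel :: real measure) \<Otimes>\<^sub>M (count_space UNIV :: nat measure))"

text \<open>A (simple) random counting measure is represented by its random set of atoms Q \<omega>;
  Q(S) = card (Q \<omega> \<inter> S).  F-Poisson random measure on [0,T] \<times> \<nat>.\<close>
definition poisson_rm :: "'w measure \<Rightarrow> (real \<Rightarrow> 'w measure) \<Rightarrow> real \<Rightarrow> real \<Rightarrow> (nat \<Rightarrow> real)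
    \<Rightarrow> ('w \<Rightarrow> (real \<times> nat) set) \<Rightarrow> bool" where
  "poisson_rm M F T \<gamma> p Q \<longleftrightarrow>
     (AE \<omega> in M. finite (Q \<omega>) \<and> Q \<omega> \<subseteq> {0..T} \<times> UNIV) \<and>
     (\<forall>S\<in>time_mark_sets.
        (\<lambda>\<omega>. card (Q \<omega> \<inter> S)) \<in> measurable M (count_space UNIV) \<and>
        (\<forall>n. measure M {\<omega>\<in>space M. card (Q \<omega> \<inter> S) = n}
               = exp (- prm_intensity \<gamma> p T S) * prm_intensity \<gamma> p T S ^ n / fact n)) \<and>
     (\<forall>(J::nat set) S. finite J \<longrightarrow> (\<forall>j\<in>J. S j \<in> time_mark_sets) \<longrightarrow> disjoint_family_on S J \<longrightarrow>
        prob_space.indep_vars M (\<lambda>_. count_space UNIV) (\<lambda>j \<omega>. card (Q \<omega> \<inter> S j)) J) \<and>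
     (\<forall>s\<in>{0..T}. \<forall>S\<in>time_mark_sets.
        (S \<subseteq> {0..s} \<times> UNIV \<longrightarrow> (\<lambda>\<omega>. card (Q \<omega> \<inter> S)) \<in> measurable (F s) (count_space UNIV)) \<and>
        (S \<subseteq> {s<..T} \<times> UNIV \<longrightarrow> indep_of M (sets (F s)) (\<lambda>\<omega>. card (Q \<omega> \<inter> S)) (count_space UNIV)))"

definition sigma_BM :: "'w measure \<Rightarrow> real \<Rightarrow> (real \<Rightarrow> 'w \<Rightarrow> real^'m) \<Rightarrow> 'w set set" where
  "sigma_BM M T W = sigma_sets (space M)
     {W t -` C \<inter> space M | t C. t \<in> {0..T} \<and> C \<in> sets borel}"

definition sigma_PRM :: "'w measure \<Rightarrow> ('w \<Rightarrow> (real \<times> nat) set) \<Rightarrow> 'w set set" where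
  "sigma_PRM M Q = sigma_sets (space M)
     {{\<omega>\<in>space M. card (Q \<omega> \<inter> S) = n} | S n. S \<in> time_mark_sets}"

definition mutually_indep :: "'w measure \<Rightarrow> real \<Rightarrow> (label \<Rightarrow> real \<Rightarrow> 'w \<Rightarrow> real^'m)
    \<Rightarrow> (label \<Rightarrow> 'w \<Rightarrow> (real \<times> nat) set) \<Rightarrow> bool" where
  "mutually_indep M T B Q \<longleftrightarrow>
     prob_space.indep_sets M
       (\<lambda>k. case k of Inl i \<Rightarrow> sigma_BM M T (B i) | Inr i \<Rightarrow> sigma_PRM M (Q i)) UNIV"

definition progressive :: "(real \<Rightarrow> 'w measure) \<Rightarrow> real \<Rightarrow> (real \<Rightarrow> 'w \<Rightarrow> 'b::topological_space) \<Rightarrow> bool" where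
  "progressive F T X \<longleftrightarrow>
     (\<forall>t\<in>{0..T}. (\<lambda>(s, \<omega>). X s \<omega>) \<in> borel_measurable (restrict_space borel {0..t} \<Otimes>\<^sub>M F t))"

definition simple_pred :: "(real \<Rightarrow> 'w measure) \<Rightarrow> real \<Rightarrow> real list \<Rightarrow> (nat \<Rightarrow> 'w \<Rightarrow> real) \<Rightarrow> bool" where
  "simple_pred F T ts \<xi> \<longleftrightarrow> ts \<noteq> [] \<and> sorted_wrt (<) ts \<and> hd ts = 0 \<and> last ts = T \<and>
     (\<forall>k < length ts - 1. \<xi> k \<in> borel_measurable (F (ts ! k)) \<and>
        (\<exists>C. \<forall>\<omega>\<in>space (F (ts ! k)). \<bar>\<xi> k \<omega>\<bar> \<le> C))"

definition sp_val :: "real list \<Rightarrow> (nat \<Rightarrow> 'w \<Rightarrow> real) \<Rightarrow> real \<Rightarrow> 'w \<Rightarrow> real" where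
  "sp_val ts \<xi> s \<omega> = (\<Sum>k<length ts - 1. \<xi> k \<omega> * indicator {ts ! k<..ts ! Suc k} s)"

definition sp_int :: "(real \<Rightarrow> 'w \<Rightarrow> real) \<Rightarrow> real list \<Rightarrow> (nat \<Rightarrow> 'w \<Rightarrow> real) \<Rightarrow> real \<Rightarrow> 'w \<Rightarrow> real" where
  "sp_int W ts \<xi> s \<omega> =
     (\<Sum>k<length ts - 1. \<xi> k \<omega> * (W (min (ts ! Suc k) s) \<omega> - W (min (ts ! k) s) \<omega>))"

definition conv_prob0 :: "'w measure \<Rightarrow> (nat \<Rightarrow> 'w \<Rightarrow> real) \<Rightarrow> bool" where
  "conv_prob0 M Z \<longleftrightarrow> (\<forall>n. Z n \<in> borel_measurable M) \<and>
     (\<forall>e>0. (\<lambda>n. measure M {\<omega>\<in>space M. \<bar>Z n \<omega>\<bar> > e}) \<longlonglongrightarrow> 0)"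

definition is_ito :: "'w measure \<Rightarrow> (real \<Rightarrow> 'w measure) \<Rightarrow> real \<Rightarrow> (real \<Rightarrow> 'w \<Rightarrow> real)
    \<Rightarrow> (real \<Rightarrow> 'w \<Rightarrow> real) \<Rightarrow> (real \<Rightarrow> 'w \<Rightarrow> real) \<Rightarrow> bool" where
  "is_ito M F T W H I \<longleftrightarrow> progressive F T H \<and>
     (AE \<omega> in M. set_integrable lborel {0..T} (\<lambda>s. (H s \<omega>)\<^sup>2)) \<and>
     (\<forall>s\<in>{0..T}. I s \<in> borel_measurable (F s)) \<and>
     (AE \<omega> in M. continuous_on {0..T} (\<lambda>s. I s \<omega>)) \<and>
     (\<exists>ts \<xi>. (\<forall>n. simple_pred F T (ts n) (\<xi> n)) \<and>
        conv_prob0 M (\<lambda>n \<omega>. LINT s:{0..T}|lborel. (sp_val (ts n) (\<xi> n) s \<omega> - H s \<omega>)\<^sup>2) \<and>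
        conv_prob0 M (\<lambda>n \<omega>. Sup ((\<lambda>s. \<bar>sp_int W (ts n) (\<xi> n) s \<omega> - I s \<omega>\<bar>) ` {0..T})))"

definition first_atom :: "(real \<times> nat) set \<Rightarrow> real \<Rightarrow> real \<Rightarrow> (real \<times> nat) option" where
  "first_atom S b u = (if \<exists>r k. (r, k) \<in> S \<and> b < r \<and> r \<le> u
     then Some (SOME (r, k). (r, k) \<in> S \<and> b < r \<and> r \<le> u \<and>
                  (\<forall>r' k'. (r', k') \<in> S \<and> b < r' \<and> r' \<le> u \<longrightarrow> r \<le> r'))
     else None)"

text \<open>Birth time of a label (on a fixed sample path given by the atom sets q j = Q^j(\<omega>)),
  argument is the reversed label.  Particles of V are born at t; the child i c of i is
  born at the death time \<tau>_i of i if \<tau>_i \<le> T and the mark k of that atom satisfies c < k.\<close>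
fun birth_rev :: "label set \<Rightarrow> real \<Rightarrow> real \<Rightarrow> (label \<Rightarrow> (real \<times> nat) set) \<Rightarrow> label \<Rightarrow> real option" where
  "birth_rev V t T q [] = (if [] \<in> V then Some t else None)"
| "birth_rev V t T q (c # r) = (if rev (c # r) \<in> V then Some t else
     (case birth_rev V t T q r of
        None \<Rightarrow> None
      | Some b \<Rightarrow> (case first_atom (q (rev r)) b T of
                    None \<Rightarrow> None
                  | Some (\<tau>, k) \<Rightarrow> (if c < k then Some \<tau> else None))))"

definition birth :: "label set \<Rightarrow> real \<Rightarrow> real \<Rightarrow> (label \<Rightarrow> (real \<times> nat) set) \<Rightarrow> label \<Rightarrow> real option" where
  "birth V t T q i = birth_rev V t T q (rev i)"

definition stop_time :: "label set \<Rightarrow> real \<Rightarrow> real \<Rightarrow> (label \<Rightarrow> (real \<times> nat) set) \<Rightarrow> label \<Rightarrow> real" where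
  "stop_time V t T q i = (case birth V t T q i of None \<Rightarrow> T
     | Some b \<Rightarrow> (case first_atom (q i) b T of None \<Rightarrow> T | Some (\<tau>, k) \<Rightarrow> \<tau>))"

definition active :: "label set \<Rightarrow> real \<Rightarrow> real \<Rightarrow> (label \<Rightarrow> (real \<times> nat) set) \<Rightarrow> label \<Rightarrow> real \<Rightarrow> bool" where
  "active V t T q i r \<longleftrightarrow> (case birth V t T q i of None \<Rightarrow> False
     | Some b \<Rightarrow> b < r \<and> r \<le> stop_time V t T q i)"

definition alive_T :: "label set \<Rightarrow> real \<Rightarrow> real \<Rightarrow> (label \<Rightarrow> (real \<times> nat) set) \<Rightarrow> label \<Rightarrow> bool" where
  "alive_T V t T q i \<longleftrightarrow> (\<exists>b. birth V t T q i = Some b \<and> first_atom (q i) b T = None)"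

definition branching_sol ::
  "'w measure \<Rightarrow> (real \<Rightarrow> 'w measure) \<Rightarrow> real \<Rightarrow> (label \<Rightarrow> real \<Rightarrow> 'w \<Rightarrow> real^'m)
   \<Rightarrow> (label \<Rightarrow> 'w \<Rightarrow> (real \<times> nat) set)
   \<Rightarrow> (real^'d \<Rightarrow> 'a \<Rightarrow> real^'d) \<Rightarrow> (real^'d \<Rightarrow> 'a \<Rightarrow> real^'m^'d)
   \<Rightarrow> (real^'d \<Rightarrow> real \<Rightarrow> 'a \<Rightarrow> real) \<Rightarrow> (real^'d \<Rightarrow> 'a \<Rightarrow> real^'m)
   \<Rightarrow> (label \<Rightarrow> real \<Rightarrow> 'w \<Rightarrow> 'a) \<Rightarrow> real \<Rightarrow> label set \<Rightarrow> (label \<Rightarrow> real^'d) \<Rightarrow> real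
   \<Rightarrow> (label \<Rightarrow> real \<Rightarrow> 'w \<Rightarrow> real^'d) \<Rightarrow> (label \<Rightarrow> real \<Rightarrow> 'w \<Rightarrow> real) \<Rightarrow> bool" where
  "branching_sol M F T B Q lam sig lamY sigY \<alpha> t V x y X Y \<longleftrightarrow>
     (AE \<omega> in M. \<forall>i\<in>V. \<forall>s\<in>{0..t}. X i s \<omega> = x i \<and> Y i s \<omega> = y) \<and>
     (AE \<omega> in M. \<forall>i c b. i @ [c] \<notin> V \<longrightarrow> birth V t T (\<lambda>j. Q j \<omega>) (i @ [c]) = Some b \<longrightarrow>
         X (i @ [c]) b \<omega> = X i b \<omega> \<and> Y (i @ [c]) b \<omega> = Y i b \<omega>) \<and>
     (\<forall>i. \<exists>(I :: 'd \<Rightarrow> 'm \<Rightarrow> real \<Rightarrow> 'w \<Rightarrow> real) (J :: 'm \<Rightarrow> real \<Rightarrow> 'w \<Rightarrow> real).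
        (\<forall>j k. is_ito M F T (\<lambda>s \<omega>. B i s \<omega> $ k)
           (\<lambda>r \<omega>. if active V t T (\<lambda>l. Q l \<omega>) i r then sig (X i r \<omega>) (\<alpha> i r \<omega>) $ j $ k else 0) (I j k)) \<and>
        (\<forall>k. is_ito M F T (\<lambda>s \<omega>. B i s \<omega> $ k)
           (\<lambda>r \<omega>. if active V t T (\<lambda>l. Q l \<omega>) i r then sigY (X i r \<omega>) (\<alpha> i r \<omega>) $ k else 0) (J k)) \<and>
        (AE \<omega> in M. \<forall>b. birth V t T (\<lambda>l. Q l \<omega>) i = Some b \<longrightarrow>
           (let \<rho> = stop_time V t T (\<lambda>l. Q l \<omega>) i in
            set_integrable lborel {b..\<rho>} (\<lambda>r. lam (X i r \<omega>) (\<alpha> i r \<omega>)) \<and>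
            set_integrable lborel {b..\<rho>} (\<lambda>r. lamY (X i r \<omega>) (Y i r \<omega>) (\<alpha> i r \<omega>)) \<and>
            (\<forall>s\<in>{b..\<rho>}.
               X i s \<omega> = X i b \<omega> + set_lebesgue_integral lborel {b..s} (\<lambda>r. lam (X i r \<omega>) (\<alpha> i r \<omega>))
                  + (\<chi> j. \<Sum>k\<in>UNIV. I j k s \<omega> - I j k b \<omega>) \<and>
               Y i s \<omega> = Y i b \<omega> + set_lebesgue_integral lborel {b..s} (\<lambda>r. lamY (X i r \<omega>) (Y i r \<omega>) (\<alpha> i r \<omega>))
                  + (\<Sum>k\<in>UNIV. J k s \<omega> - J k b \<omega>)))))"

text \<open>Reachability set R(t,\<mu>), \<mu> represented by (V, x).  The controlled system is required
  to have a solution, and the (under (H0) unique) solution satisfies the terminal constraint.\<close>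
definition reach ::
  "'w measure \<Rightarrow> (real \<Rightarrow> 'w measure) \<Rightarrow> real \<Rightarrow> (label \<Rightarrow> real \<Rightarrow> 'w \<Rightarrow> real^'m)
   \<Rightarrow> (label \<Rightarrow> 'w \<Rightarrow> (real \<times> nat) set)
   \<Rightarrow> (real^'d \<Rightarrow> 'a::topological_space \<Rightarrow> real^'d) \<Rightarrow> (real^'d \<Rightarrow> 'a \<Rightarrow> real^'m^'d)
   \<Rightarrow> (real^'d \<Rightarrow> real \<Rightarrow> 'a \<Rightarrow> real) \<Rightarrow> (real^'d \<Rightarrow> 'a \<Rightarrow> real^'m)
   \<Rightarrow> (label \<Rightarrow> real^'d \<Rightarrow> real) \<Rightarrow> real \<Rightarrow> label set \<Rightarrow> (label \<Rightarrow> real^'d) \<Rightarrow> real set" where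
  "reach M F T B Q lam sig lamY sigY g t V x = {y. \<exists>\<alpha>. (\<forall>i. progressive F T (\<alpha> i)) \<and>
     (\<exists>X Y. branching_sol M F T B Q lam sig lamY sigY \<alpha> t V x y X Y) \<and>
     (\<forall>X Y. branching_sol M F T B Q lam sig lamY sigY \<alpha> t V x y X Y \<longrightarrow>
        (AE \<omega> in M. \<forall>i. alive_T V t T (\<lambda>l. Q l \<omega>) i \<longrightarrow> g i (X i T \<omega>) \<le> Y i T \<omega>))}"

end

theory Submission
  imports Defs "HOL-Analysis.Analysis"
begin


lemma wbound:
  fixes f :: "real \<Rightarrow> real"
  assumes bs: "b \<le> s" and L: "L > 0" and fi: "f integrable_on {b..s}"
    and fb: "\<forall>r\<in>{b..s}. \<bar>f r\<bar> \<le> L*m*exp(2*L*(r-b))"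
  shows "\<bar>integral {b..s} f\<bar> \<le> m/2 * exp(2*L*(s-b))"
proof -
  have "\<bar>f b\<bar> \<le> L*m" using fb[rule_format, of b] bs by simp
  hence m: "m \<ge> 0" using L by (smt (verit) zero_le_mult_iff)
  let ?F = "\<lambda>r. m/2 * exp(2*L*(r-b))"
  have d: "\<forall>x\<in>{b..s}. (?F has_vector_derivative (L*m*exp(2*L*(x-b)))) (at x within {b..s})"
  proof
    fix x assume "x \<in> {b..s}"
    have "(?F has_real_derivative (m/2 * (exp(2*L*(x-b)) * (2*L*1)))) (at x within {b..s})"
      by (intro derivative_eq_intros) auto
    thus "(?F has_vector_derivative (L*m*exp(2*L*(x-b)))) (at x within {b..s})"
      by (simp add: has_real_derivative_iff_has_vector_derivative[symmetric] algebra_simps)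
  qed
  have hi: "((\<lambda>r. L*m*exp(2*L*(r-b))) has_integral (?F s - ?F b)) {b..s}"
    using fundamental_theorem_of_calculus[OF bs, where f="?F" and f'="\<lambda>r. L*m*exp(2*L*(r-b))"] d by blast
  have "\<bar>integral {b..s} f\<bar> \<le> integral {b..s} (\<lambda>r. L*m*exp(2*L*(r-b)))"
    using integral_norm_bound_integral[OF fi has_integral_integrable[OF hi]] fb by auto
  also have "\<dots> = ?F s - ?F b" using hi by (rule integral_unique)
  also have "\<dots> \<le> ?F s" using m by simp
  finally show ?thesis .
qed

definition ode_hyp :: "(real \<Rightarrow> real \<Rightarrow> real) \<Rightarrow> real \<Rightarrow> real \<Rightarrow> real \<Rightarrow> bool" where
  "ode_hyp G L b \<rho> \<longleftrightarrow> L > 0 \<and> (\<forall>r\<in>{b..\<rho>}. \<forall>v w. \<bar>G r v - G r w\<bar> \<le> L*\<bar>v-w\<bar>) \<and>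
     (\<forall>r\<in>{b..\<rho>}. G r 0 = 0) \<and>
     (\<forall>u. continuous_on {b..\<rho>} u \<longrightarrow> (\<lambda>r. G r (u r)) \<in> borel_measurable (restrict_space borel {b..\<rho>}))"

lemma cont_bounded:
  fixes u :: "real \<Rightarrow> real"
  assumes "continuous_on {b..\<rho>} u"
  obtains B where "B \<ge> 0" "\<forall>r\<in>{b..\<rho>}. \<bar>u r\<bar> \<le> B"
proof -
  have "compact (u ` {b..\<rho>})" using assms compact_continuous_image by blast
  then obtain B where "B > 0" "\<forall>x\<in>u ` {b..\<rho>}. norm x \<le> B"
    using compact_imp_bounded bounded_pos by metis
  thus ?thesis using that[of B] by auto
qed

lemma ode_int:
  assumes H: "ode_hyp G L b \<rho>" and u: "continuous_on {b..\<rho>} u"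
  shows "set_integrable lborel {b..\<rho>} (\<lambda>r. G r (u r))"
proof -
  obtain B where B: "B \<ge> 0" "\<forall>r\<in>{b..\<rho>}. \<bar>u r\<bar> \<le> B" using cont_bounded[OF u] by blast
  have L: "L > 0" and lip: "\<forall>r\<in>{b..\<rho>}. \<forall>v w. \<bar>G r v - G r w\<bar> \<le> L*\<bar>v-w\<bar>"
    and g0: "\<forall>r\<in>{b..\<rho>}. G r 0 = 0"
    and me: "(\<lambda>r. G r (u r)) \<in> borel_measurable (restrict_space borel {b..\<rho>})"
    using H u unfolding ode_hyp_def by auto
  have bnd: "\<forall>r\<in>{b..\<rho>}. \<bar>G r (u r)\<bar> \<le> L*B"
  proof
    fix r assume r: "r \<in> {b..\<rho>}"
    have "\<bar>G r (u r)\<bar> = \<bar>G r (u r) - G r 0\<bar>" using g0 r by simp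
    also have "\<dots> \<le> L*\<bar>u r\<bar>" using lip r by (metis diff_zero)
    also have "\<dots> \<le> L*B" using B r L by (simp add: mult_left_mono)
    finally show "\<bar>G r (u r)\<bar> \<le> L*B" .
  qed
  have m2: "(\<lambda>x. indicator {b..\<rho>} x *\<^sub>R G x (u x)) \<in> borel_measurable borel"
    using me by (subst (asm) borel_measurable_restrict_space_iff) auto
  show ?thesis unfolding set_integrable_def
    apply (rule integrableI_bounded_set[where A="{b..\<rho>}" and B="L*B"])
    using m2 bnd by (auto simp: indicator_def emeasure_lborel_Icc_eq)
qed

lemma ode_int_hk:
  assumes H: "ode_hyp G L b \<rho>" and u: "continuous_on {b..\<rho>} u" and s: "s \<in> {b..\<rho>}"
  shows "(\<lambda>r. G r (u r)) integrable_on {b..s}"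
proof -
  have "(\<lambda>r. G r (u r)) integrable_on {b..\<rho>}"
    using set_borel_integral_eq_integral(1)[OF ode_int[OF H u]] .
  thus ?thesis using integrable_subinterval_real s by fastforce
qed

lemma ode_west:
  assumes H: "ode_hyp G L b \<rho>" and u: "continuous_on {b..\<rho>} u" and v: "continuous_on {b..\<rho>} v"
    and uv: "\<forall>r\<in>{b..\<rho>}. \<bar>u r - v r\<bar> \<le> m*exp(2*L*(r-b))" and s: "s \<in> {b..\<rho>}"
  shows "\<bar>integral {b..s} (\<lambda>r. G r (u r)) - integral {b..s} (\<lambda>r. G r (v r))\<bar> \<le> m/2*exp(2*L*(s-b))"
proof -
  have L: "L > 0" and lip: "\<forall>r\<in>{b..\<rho>}. \<forall>v w. \<bar>G r v - G r w\<bar> \<le> L*\<bar>v-w\<bar>"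
    using H unfolding ode_hyp_def by auto
  have "integral {b..s} (\<lambda>r. G r (u r)) - integral {b..s} (\<lambda>r. G r (v r))
      = integral {b..s} (\<lambda>r. G r (u r) - G r (v r))"
    using integral_diff[OF ode_int_hk[OF H u s] ode_int_hk[OF H v s]] by simp
  also have "\<bar>\<dots>\<bar> \<le> m/2*exp(2*L*(s-b))"
  proof (rule wbound)
    show "b \<le> s" using s by auto
    show "L > 0" by fact
    show "(\<lambda>r. G r (u r) - G r (v r)) integrable_on {b..s}"
      using integrable_diff[OF ode_int_hk[OF H u s] ode_int_hk[OF H v s]] .
    show "\<forall>r\<in>{b..s}. \<bar>G r (u r) - G r (v r)\<bar> \<le> L * m * exp (2 * L * (r - b))"
    proof
      fix r assume r: "r \<in> {b..s}"
      hence r': "r \<in> {b..\<rho>}" using s by auto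
      have "\<bar>G r (u r) - G r (v r)\<bar> \<le> L * \<bar>u r - v r\<bar>" using lip r' by blast
      also have "\<dots> \<le> L * (m*exp(2*L*(r-b)))" using uv r' L by (simp add: mult_left_mono)
      finally show "\<bar>G r (u r) - G r (v r)\<bar> \<le> L * m * exp (2 * L * (r - b))" by simp
    qed
  qed
  finally show ?thesis .
qed

lemma ode_cont:
  assumes H: "ode_hyp G L b \<rho>" and u: "continuous_on {b..\<rho>} u"
  shows "continuous_on {b..\<rho>} (\<lambda>s. D0 + integral {b..s} (\<lambda>r. G r (u r)))"
proof -
  have "(\<lambda>r. G r (u r)) integrable_on {b..\<rho>}"
    using set_borel_integral_eq_integral(1)[OF ode_int[OF H u]] .
  from indefinite_integral_continuous_1[OF this] show ?thesis
    by (intro continuous_intros) auto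
qed


lemma ode_exists:
  assumes H: "ode_hyp G L b \<rho>"
  shows "\<exists>D. continuous_on {b..\<rho>} D \<and> (\<forall>s\<in>{b..\<rho>}. D s = D0 + integral {b..s} (\<lambda>r. G r (D r)))"
proof -
  let ?I = "{b..\<rho>}"
  have L: "L > 0" using H unfolding ode_hyp_def by auto
  define \<Phi> where "\<Phi> u s = D0 + integral {b..s} (\<lambda>r. G r (u r))" for u :: "real \<Rightarrow> real" and s
  define u where "u n = (\<Phi> ^^ n) (\<lambda>_. D0)" for n
  have usuc: "u (Suc n) = \<Phi> (u n)" for n by (simp add: u_def)
  have uc: "continuous_on ?I (u n)" for n
  proof (induction n)
    case 0 thus ?case by (simp add: u_def)
  next
    case (Suc n) thus ?case unfolding usuc \<Phi>_def using ode_cont[OF H] by blast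
  qed
  have ex1: "1 \<le> exp(2*L*(r-b))" if "r \<in> ?I" for r using that L by auto
  obtain m0 where m0: "m0 \<ge> 0" "\<forall>s\<in>?I. \<bar>u 1 s - u 0 s\<bar> \<le> m0"
  proof -
    have "continuous_on ?I (\<lambda>s. u 1 s - u 0 s)" using uc by (intro continuous_intros)
    from cont_bounded[OF this] show ?thesis using that by blast
  qed
  have step: "\<forall>s\<in>?I. \<bar>u (Suc n) s - u n s\<bar> \<le> (m0/2^n) * exp(2*L*(s-b))" for n
  proof (induction n)
    case 0
    show ?case
    proof
      fix s assume s: "s \<in> ?I"
      have "\<bar>u (Suc 0) s - u 0 s\<bar> \<le> m0" using m0 s by simp
      also have "\<dots> \<le> m0 * exp(2*L*(s-b))" using ex1[OF s] m0 by (simp add: mult_le_cancel_left1)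
      finally show "\<bar>u (Suc 0) s - u 0 s\<bar> \<le> (m0/2^0) * exp(2*L*(s-b))" by simp
    qed
  next
    case (Suc n)
    show ?case
    proof
      fix s assume s: "s \<in> ?I"
      have "\<bar>u (Suc (Suc n)) s - u (Suc n) s\<bar>
          = \<bar>integral {b..s} (\<lambda>r. G r (u (Suc n) r)) - integral {b..s} (\<lambda>r. G r (u n r))\<bar>"
        unfolding usuc[of "Suc n"] usuc[of n] \<Phi>_def by simp
      also have "\<dots> \<le> (m0/2^n)/2 * exp(2*L*(s-b))"
        by (rule ode_west[OF H uc uc Suc.IH s])
      finally show "\<bar>u (Suc (Suc n)) s - u (Suc n) s\<bar> \<le> (m0/2^(Suc n)) * exp(2*L*(s-b))" by simp
    qed
  qed
  define C where "C = m0 * exp(2*L*(\<rho>-b))"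
  have C0: "C \<ge> 0" using m0 by (simp add: C_def)
  have stepC: "\<bar>u (Suc n) s - u n s\<bar> \<le> C/2^n" if s: "s \<in> ?I" for n s
  proof -
    have "\<bar>u (Suc n) s - u n s\<bar> \<le> (m0/2^n) * exp(2*L*(s-b))" using step s by blast
    also have "\<dots> \<le> (m0/2^n) * exp(2*L*(\<rho>-b))"
      using s L m0 by (intro mult_left_mono) auto
    finally show ?thesis by (simp add: C_def)
  qed
  have tele: "\<bar>u k s - u n s\<bar> \<le> 2*C*(1/2^n - 1/2^k)" if s: "s \<in> ?I" and kn: "n \<le> k" for k n s
    using kn
  proof (induction k rule: dec_induct)
    case base thus ?case by simp
  next
    case (step k)
    have "\<bar>u (Suc k) s - u n s\<bar> \<le> \<bar>u k s - u n s\<bar> + \<bar>u (Suc k) s - u k s\<bar>" by simp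
    also have "\<dots> \<le> 2*C*(1/2^n - 1/2^k) + C/2^k" using step.IH stepC[OF s] by (intro add_mono) auto
    also have "\<dots> = 2*C*(1/2^n - 1/2^Suc k)" by (simp add: field_simps)
    finally show ?case .
  qed
  have tele2: "\<bar>u k s - u n s\<bar> \<le> 2*C/2^n" if s: "s \<in> ?I" and kn: "n \<le> k" for k n s
  proof -
    have "2*C*(1/2^n - 1/2^k) \<le> 2*C/2^n" using C0 by (simp add: field_simps)
    thus ?thesis using tele[OF s kn] by linarith
  qed
  have small: "\<exists>N. \<forall>n\<ge>N. 2*C/2^n < e" if e: "e > 0" for e
  proof -
    have "(\<lambda>n. 2*C/2^n) \<longlonglongrightarrow> 0" by (rule LIMSEQ_divide_realpow_zero) simp
    hence "\<exists>N. \<forall>n\<ge>N. norm (2*C/2^n - 0) < e" using e unfolding LIMSEQ_iff by blast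
    thus ?thesis using C0 by simp
  qed
  have conv: "convergent (\<lambda>n. u n s)" if s: "s \<in> ?I" for s
  proof -
    have "Cauchy (\<lambda>n. u n s)"
    proof (rule metric_CauchyI)
      fix e :: real assume e: "e > 0"
      obtain N where N: "\<forall>n\<ge>N. 2*C/2^n < e" using small[OF e] by blast
      show "\<exists>M. \<forall>m\<ge>M. \<forall>n\<ge>M. dist (u m s) (u n s) < e"
      proof (intro exI allI impI)
        fix m n assume "N \<le> m" "N \<le> n"
        show "dist (u m s) (u n s) < e"
        proof (cases "m \<le> n")
          case True
          have "\<bar>u n s - u m s\<bar> \<le> 2*C/2^m" by (rule tele2[OF s True])
          moreover have "2*C/2^m < e" using N \<open>N \<le> m\<close> by blast
          ultimately show ?thesis by (simp add: dist_real_def abs_minus_commute)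
        next
          case False
          have "\<bar>u m s - u n s\<bar> \<le> 2*C/2^n" using False by (intro tele2[OF s]) auto
          moreover have "2*C/2^n < e" using N \<open>N \<le> n\<close> by blast
          ultimately show ?thesis by (simp add: dist_real_def)
        qed
      qed
    qed
    thus ?thesis by (simp add: Cauchy_convergent_iff)
  qed
  define D where "D s = lim (\<lambda>n. u n s)" for s
  have lim: "(\<lambda>n. u n s) \<longlonglongrightarrow> D s" if "s \<in> ?I" for s
    using conv[OF that] by (simp add: D_def convergent_LIMSEQ_iff)
  have Db: "\<bar>D s - u n s\<bar> \<le> 2*C/2^n" if s: "s \<in> ?I" for s n
  proof (rule LIMSEQ_le_const2)
    show "(\<lambda>k. \<bar>u k s - u n s\<bar>) \<longlonglongrightarrow> \<bar>D s - u n s\<bar>" using lim[OF s] by (intro tendsto_intros)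
    show "\<exists>N. \<forall>k\<ge>N. \<bar>u k s - u n s\<bar> \<le> 2*C/2^n" using tele2[OF s] by blast
  qed
  have ul: "uniform_limit ?I u D sequentially"
  proof (rule uniform_limitI)
    fix e :: real assume e: "e > 0"
    obtain N where N: "\<forall>n\<ge>N. 2*C/2^n < e" using small[OF e] by blast
    show "\<forall>\<^sub>F n in sequentially. \<forall>x\<in>?I. dist (u n x) (D x) < e"
      unfolding eventually_sequentially
    proof (intro exI allI impI ballI)
      fix n x assume "N \<le> n" "x \<in> ?I"
      moreover have "2*C/2^n < e" using N \<open>N \<le> n\<close> by blast
      ultimately show "dist (u n x) (D x) < e" using Db[of x n] by (simp add: dist_real_def abs_minus_commute)
    qed
  qed
  have Dc: "continuous_on ?I D"
    by (rule uniform_limit_theorem[OF _ ul]) (auto simp: uc)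
  have fixD: "D s = D0 + integral {b..s} (\<lambda>r. G r (D r))" if s: "s \<in> ?I" for s
  proof -
    have t1: "(\<lambda>n. u (Suc n) s) \<longlonglongrightarrow> D s" using lim[OF s] by (rule LIMSEQ_Suc)
    have "(\<lambda>n. u (Suc n) s - \<Phi> D s) \<longlonglongrightarrow> 0"
    proof (rule Lim_null_comparison)
      show "\<forall>\<^sub>F n in sequentially. norm (u (Suc n) s - \<Phi> D s) \<le> (C*exp(2*L*(\<rho>-b)))/2^n"
      proof (rule always_eventually, rule allI)
        fix n
        have bb: "\<forall>r\<in>?I. \<bar>u n r - D r\<bar> \<le> (2*C/2^n)*exp(2*L*(r-b))"
        proof
          fix r assume r: "r \<in> ?I"
          have "\<bar>u n r - D r\<bar> \<le> 2*C/2^n" using Db[OF r, of n] by (simp add: abs_minus_commute)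
          also have "\<dots> \<le> (2*C/2^n)*exp(2*L*(r-b))"
          proof -
            have "0 \<le> 2*C/2^n" using C0 by simp
            thus ?thesis using ex1[OF r] by (metis mult.right_neutral mult_left_mono)
          qed
          finally show "\<bar>u n r - D r\<bar> \<le> (2*C/2^n)*exp(2*L*(r-b))" .
        qed
        have "norm (u (Suc n) s - \<Phi> D s)
            = \<bar>integral {b..s} (\<lambda>r. G r (u n r)) - integral {b..s} (\<lambda>r. G r (D r))\<bar>"
          unfolding usuc \<Phi>_def by simp
        also have "\<dots> \<le> (2*C/2^n)/2*exp(2*L*(s-b))"
          by (rule ode_west[OF H uc Dc bb s])
        also have "\<dots> \<le> (2*C/2^n)/2*exp(2*L*(\<rho>-b))"
          using s L C0 by (intro mult_left_mono) auto
        also have "\<dots> = (C*exp(2*L*(\<rho>-b)))/2^n" by simp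
        finally show "norm (u (Suc n) s - \<Phi> D s) \<le> (C*exp(2*L*(\<rho>-b)))/2^n" .
      qed
      show "(\<lambda>n. C*exp(2*L*(\<rho>-b))/2^n) \<longlonglongrightarrow> 0" by (rule LIMSEQ_divide_realpow_zero) simp
    qed
    hence t2: "(\<lambda>n. u (Suc n) s) \<longlonglongrightarrow> \<Phi> D s" by (simp add: LIM_zero_iff)
    from LIMSEQ_unique[OF t1 t2] show ?thesis by (simp add: \<Phi>_def)
  qed
  show ?thesis using Dc fixD by blast
qed


lemma gronwall_w:
  fixes \<phi> :: "real \<Rightarrow> real"
  assumes L: "L > 0" and c: "continuous_on {b..\<rho>} \<phi>" and nn: "\<forall>r\<in>{b..\<rho>}. \<phi> r \<ge> 0"
    and ineq: "\<forall>s\<in>{b..\<rho>}. \<phi> s \<le> L * integral {b..s} \<phi>"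
  shows "\<forall>s\<in>{b..\<rho>}. \<phi> s = 0"
proof (cases "b \<le> \<rho>")
  case False thus ?thesis by auto
next
  case True
  let ?I = "{b..\<rho>}"
  let ?\<psi> = "\<lambda>r. \<phi> r * exp(-(2*L*(r-b)))"
  have "continuous_on ?I ?\<psi>" using c by (intro continuous_intros)
  then obtain x where x: "x \<in> ?I" "\<forall>y\<in>?I. ?\<psi> y \<le> ?\<psi> x"
    using continuous_attains_sup[of ?I ?\<psi>] True by auto
  define m where "m = ?\<psi> x"
  have pb: "\<phi> r \<le> m * exp(2*L*(r-b))" if r: "r \<in> ?I" for r
  proof -
    have e1: "exp(-(2*L*(r-b))) * exp(2*L*(r-b)) = 1" by (simp add: exp_minus_inverse mult.commute)
    have "\<phi> r = ?\<psi> r * exp(2*L*(r-b))" by (metis e1 mult.assoc mult.right_neutral)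
    also have "\<dots> \<le> m * exp(2*L*(r-b))" using x r by (simp add: m_def)
    finally show ?thesis .
  qed
  have hs: "?\<psi> s \<le> m/2" if s: "s \<in> ?I" for s
  proof -
    have fi: "\<phi> integrable_on {b..s}"
      by (intro integrable_continuous_real continuous_on_subset[OF c]) (use s in auto)
    have "\<phi> s \<le> L * integral {b..s} \<phi>" using ineq s by blast
    also have "\<dots> = integral {b..s} (\<lambda>r. L * \<phi> r)" by simp
    also have "\<dots> \<le> \<bar>integral {b..s} (\<lambda>r. L * \<phi> r)\<bar>" by simp
    also have "\<dots> \<le> m/2 * exp(2*L*(s-b))"
    proof (rule wbound)
      show "b \<le> s" using s by auto
      show "L > 0" by fact
      show "(\<lambda>r. L * \<phi> r) integrable_on {b..s}" using fi L by (subst integrable_on_cmult_iff) auto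
      show "\<forall>r\<in>{b..s}. \<bar>L * \<phi> r\<bar> \<le> L * m * exp (2 * L * (r - b))"
      proof
        fix r assume "r \<in> {b..s}"
        hence r: "r \<in> ?I" using s by auto
        have "\<bar>L * \<phi> r\<bar> = L * \<phi> r" using nn r L by simp
        also have "\<dots> \<le> L * (m * exp (2 * L * (r - b)))" using pb[OF r] L by (simp add: mult_left_mono)
        finally show "\<bar>L * \<phi> r\<bar> \<le> L * m * exp (2 * L * (r - b))" by simp
      qed
    qed
    finally have "\<phi> s \<le> m/2 * exp(2*L*(s-b))" .
    hence "\<phi> s * exp(-(2*L*(s-b))) \<le> m/2 * exp(2*L*(s-b)) * exp(-(2*L*(s-b)))"
      by (simp add: mult_right_mono)
    moreover have "exp(2*L*(s-b)) * exp(-(2*L*(s-b))) = 1" by (simp add: exp_minus_inverse)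
    ultimately show ?thesis by (metis mult.assoc mult.right_neutral)
  qed
  have "m \<le> m/2" using hs[OF x(1)] by (simp add: m_def)
  hence m0: "m \<le> 0" by simp
  show ?thesis
  proof
    fix s assume s: "s \<in> ?I"
    have "\<phi> s \<le> m * exp(2*L*(s-b))" by (rule pb[OF s])
    also have "\<dots> \<le> 0" using m0 by (simp add: mult_nonpos_nonneg)
    finally show "\<phi> s = 0" using nn s by (simp add: order_antisym)
  qed
qed

lemma ode_nonpos:
  assumes H: "ode_hyp G L b \<rho>" and Dc: "continuous_on {b..\<rho>} D"
    and De: "\<forall>s\<in>{b..\<rho>}. D s = D0 + integral {b..s} (\<lambda>r. G r (D r))" and D0: "D0 \<le> 0"
  shows "\<forall>s\<in>{b..\<rho>}. D s \<le> 0"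
proof -
  let ?I = "{b..\<rho>}"
  have L: "L > 0" and lip: "\<forall>r\<in>{b..\<rho>}. \<forall>v w. \<bar>G r v - G r w\<bar> \<le> L*\<bar>v-w\<bar>"
    and g0: "\<forall>r\<in>{b..\<rho>}. G r 0 = 0"
    using H unfolding ode_hyp_def by auto
  define \<phi> where "\<phi> r = max (D r) 0" for r
  have \<phi>c: "continuous_on ?I \<phi>" unfolding \<phi>_def using Dc by (intro continuous_intros)
  have \<phi>i: "\<phi> integrable_on {b..s}" if "s \<in> ?I" for s
    by (intro integrable_continuous_real continuous_on_subset[OF \<phi>c]) (use that in auto)
  have ineq: "\<forall>s\<in>?I. \<phi> s \<le> L * integral {b..s} \<phi>"
  proof
    fix s assume s: "s \<in> ?I"
    have int0: "integral {b..s} \<phi> \<ge> 0"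
      using integral_nonneg[OF \<phi>i[OF s]] by (simp add: \<phi>_def)
    show "\<phi> s \<le> L * integral {b..s} \<phi>"
    proof (cases "D s \<le> 0")
      case True
      thus ?thesis using int0 L by (simp add: \<phi>_def)
    next
      case False
      let ?S = "{b..s} \<inter> D -` {..0}"
      have Db: "D b = D0" using De s by auto
      have bS: "b \<in> ?S" using Db D0 s by auto
      have clS: "closed ?S"
        using continuous_closed_preimage[OF continuous_on_subset[OF Dc]] s by auto
      define s0 where "s0 = Sup ?S"
      have bdd: "bdd_above ?S" by (rule bdd_aboveI[of _ s]) auto
      have ne: "?S \<noteq> {}" using bS by blast
      have s0S: "s0 \<in> ?S" unfolding s0_def
        using closed_contains_Sup[OF ne bdd clS] .
      have s0le: "r \<le> s0" if "r \<in> ?S" for r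
        unfolding s0_def using that bdd by (intro cSup_upper)
      have s0s: "b \<le> s0" "s0 \<le> s" "D s0 \<le> 0" using s0S by auto
      obtain z where z: "s0 \<le> z" "z \<le> s" "D z = 0"
        using IVT'[of D s0 0 s] s0s False continuous_on_subset[OF Dc] s by force
      have "z \<in> ?S" using z s0s by auto
      hence "z = s0" using s0le z by force
      hence Ds0: "D s0 = 0" using z by simp
      have pos: "D r \<ge> 0" if r: "r \<in> {s0..s}" for r
      proof (rule ccontr)
        assume "\<not> D r \<ge> 0"
        hence "r \<in> ?S" using r s0s by auto
        hence "r \<le> s0" by (rule s0le)
        hence "r = s0" using r by auto
        thus False using \<open>\<not> D r \<ge> 0\<close> Ds0 by simp
      qed
      have s0I: "s0 \<in> ?I" using s0s s by auto
      have gi: "(\<lambda>r. G r (D r)) integrable_on {b..s}" by (rule ode_int_hk[OF H Dc s])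
      have "integral {b..s0} (\<lambda>r. G r (D r)) + integral {s0..s} (\<lambda>r. G r (D r))
          = integral {b..s} (\<lambda>r. G r (D r))"
        by (rule Henstock_Kurzweil_Integration.integral_combine[OF s0s(1,2) gi])
      hence "D s = D s0 + integral {s0..s} (\<lambda>r. G r (D r))"
        using De s s0I by auto
      hence Dsv: "D s = integral {s0..s} (\<lambda>r. G r (D r))" using Ds0 by simp
      have gi2: "(\<lambda>r. G r (D r)) integrable_on {s0..s}"
        using integrable_subinterval_real[OF gi] s0s by auto
      have \<phi>i2: "\<phi> integrable_on {s0..s}"
        using integrable_subinterval_real[OF \<phi>i[OF s]] s0s by auto
      have "integral {s0..s} (\<lambda>r. G r (D r)) \<le> integral {s0..s} (\<lambda>r. L * \<phi> r)"
      proof (rule integral_le[OF gi2])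
        show "(\<lambda>r. L * \<phi> r) integrable_on {s0..s}" using \<phi>i2 L by (subst integrable_on_cmult_iff) auto
        fix r assume r: "r \<in> {s0..s}"
        hence rI: "r \<in> ?I" using s0s s by auto
        have "G r (D r) \<le> \<bar>G r (D r) - G r 0\<bar>" using g0 rI by simp
        also have "\<dots> \<le> L * \<bar>D r - 0\<bar>" using lip rI by blast
        also have "\<dots> = L * \<phi> r" using pos[OF r] by (simp add: \<phi>_def)
        finally show "G r (D r) \<le> L * \<phi> r" .
      qed
      also have "\<dots> = L * integral {s0..s} \<phi>" by simp
      also have "\<dots> \<le> L * integral {b..s} \<phi>"
      proof -
        have "integral {b..s0} \<phi> + integral {s0..s} \<phi> = integral {b..s} \<phi>"
          by (rule Henstock_Kurzweil_Integration.integral_combine[OF s0s(1,2) \<phi>i[OF s]])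
        moreover have "integral {b..s0} \<phi> \<ge> 0"
          using integral_nonneg[OF integrable_subinterval_real[OF \<phi>i[OF s]]] s0s
          by (auto simp: \<phi>_def)
        ultimately show ?thesis using L by (simp add: mult_left_mono)
      qed
      finally show ?thesis using Dsv False by (simp add: \<phi>_def)
    qed
  qed
  have nn: "\<forall>r\<in>?I. \<phi> r \<ge> 0" by (simp add: \<phi>_def)
  have "\<forall>s\<in>?I. \<phi> s = 0" by (rule gronwall_w[OF L \<phi>c nn ineq])
  thus ?thesis by (auto simp: \<phi>_def max_def split: if_splits)
qed



lemma first_atom_props:
  assumes fin: "finite S" and fa: "first_atom S b u = Some (\<tau>, k)"
  shows "(\<tau>, k) \<in> S \<and> b < \<tau> \<and> \<tau> \<le> u"
proof -
  let ?P = "\<lambda>(r, k). (r, k) \<in> S \<and> b < r \<and> r \<le> u \<and>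
                  (\<forall>r' k'. (r', k') \<in> S \<and> b < r' \<and> r' \<le> u \<longrightarrow> r \<le> r')"
  have ex: "\<exists>r k. (r, k) \<in> S \<and> b < r \<and> r \<le> u"
    using fa unfolding first_atom_def by (auto split: if_splits)
  hence eq: "(\<tau>, k) = (SOME p. ?P p)" using fa unfolding first_atom_def by (auto split: if_splits)
  let ?W = "{p\<in>S. b < fst p \<and> fst p \<le> u}"
  have Wfin: "finite ?W" using fin by auto
  have Wne: "?W \<noteq> {}" using ex by auto
  define r0 where "r0 = Min (fst ` ?W)"
  have "r0 \<in> fst ` ?W" unfolding r0_def using Wfin Wne by (intro Min_in) auto
  then obtain k0 where k0: "(r0, k0) \<in> ?W" by auto
  have "\<forall>r' k'. (r', k') \<in> S \<and> b < r' \<and> r' \<le> u \<longrightarrow> r0 \<le> r'"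
  proof (intro allI impI)
    fix r' k' assume "(r', k') \<in> S \<and> b < r' \<and> r' \<le> u"
    hence "r' \<in> fst ` ?W" by force
    thus "r0 \<le> r'" unfolding r0_def using Wfin by (intro Min_le) auto
  qed
  hence "?P (r0, k0)" using k0 by auto
  hence "?P (SOME p. ?P p)" by (rule someI)
  thus ?thesis unfolding eq[symmetric] by auto
qed

lemma birth_snoc:
  "birth V t T q (p @ [c]) = (if p @ [c] \<in> V then Some t else
     (case birth V t T q p of None \<Rightarrow> None
      | Some b \<Rightarrow> (case first_atom (q p) b T of None \<Rightarrow> None
                    | Some (\<tau>, k) \<Rightarrow> (if c < k then Some \<tau> else None))))"
  by (simp add: birth_def cong: option.case_cong)

lemma birth_nil: "birth V t T q [] = (if [] \<in> V then Some t else None)"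
  by (simp add: birth_def)

lemma birth_V: "i \<in> V \<Longrightarrow> birth V t T q i = Some t"
  by (cases i rule: rev_cases) (simp_all add: birth_nil birth_snoc)

lemma birth_range:
  assumes t: "t \<in> {0..T}" and fin: "\<forall>l. finite (q l)"
  shows "birth V t T q i = Some b \<Longrightarrow> 0 \<le> b \<and> b \<le> T"
proof (induction i arbitrary: b rule: rev_induct)
  case Nil thus ?case using t by (simp add: birth_nil split: if_splits)
next
  case (snoc c p)
  show ?case
  proof (cases "p @ [c] \<in> V")
    case True thus ?thesis using snoc.prems t by (simp add: birth_snoc)
  next
    case False
    then obtain b' \<tau> k where b': "birth V t T q p = Some b'" and fa: "first_atom (q p) b' T = Some (\<tau>, k)"
      and bt: "b = \<tau>"
      using snoc.prems by (auto simp: birth_snoc split: option.splits if_splits)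
    have "0 \<le> b'" using snoc.IH[OF b'] by simp
    thus ?thesis using first_atom_props[OF _ fa] fin bt by auto
  qed
qed

lemma stop_range:
  assumes t: "t \<in> {0..T}" and fin: "\<forall>l. finite (q l)" and bi: "birth V t T q i = Some b"
  shows "b \<le> stop_time V t T q i \<and> stop_time V t T q i \<le> T"
proof -
  have "b \<le> T" using birth_range[OF t fin bi] by simp
  thus ?thesis using bi first_atom_props fin unfolding stop_time_def
    by (auto split: option.splits) (metis less_imp_le)+
qed

fun lrec :: "(label \<Rightarrow> real \<Rightarrow> real \<Rightarrow> real) \<Rightarrow> (label \<Rightarrow> real option) \<Rightarrow> (label \<Rightarrow> real)
    \<Rightarrow> label \<Rightarrow> real \<Rightarrow> real" where
  "lrec S st bt [] = S [] (case st [] of Some d \<Rightarrow> d | None \<Rightarrow> 0)"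
| "lrec S st bt (c # r) = S (rev (c # r))
     (case st (rev (c # r)) of Some d \<Rightarrow> d | None \<Rightarrow> lrec S st bt r (bt (rev (c # r))))"

lemma lrec_rev_snoc:
  "lrec S st bt (rev (p @ [c])) = S (p @ [c])
     (case st (p @ [c]) of Some d \<Rightarrow> d | None \<Rightarrow> lrec S st bt (rev p) (bt (p @ [c])))"
  by (simp cong: option.case_cong)

lemma lrec_rev_st:
  "st i = Some d \<Longrightarrow> lrec S st bt (rev i) = S i d"
  by (cases i rule: rev_cases) auto

definition solve :: "real \<Rightarrow> (real \<Rightarrow> real \<Rightarrow> real) \<Rightarrow> real \<Rightarrow> real \<Rightarrow> real \<Rightarrow> real" where
  "solve D0 G b \<rho> = (SOME D. (\<forall>s\<le>b. D s = D0) \<and> continuous_on {b..\<rho>} D \<and>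
      (\<forall>s\<in>{b..\<rho>}. D s = D0 + integral {b..s} (\<lambda>r. G r (D r))))"

lemma solve_spec:
  assumes H: "ode_hyp G L b \<rho>"
  shows "(\<forall>s\<le>b. solve D0 G b \<rho> s = D0) \<and> continuous_on {b..\<rho>} (solve D0 G b \<rho>) \<and>
      (\<forall>s\<in>{b..\<rho>}. solve D0 G b \<rho> s = D0 + integral {b..s} (\<lambda>r. G r (solve D0 G b \<rho> r)))"
proof -
  obtain D where Dc: "continuous_on {b..\<rho>} D"
    and De: "\<forall>s\<in>{b..\<rho>}. D s = D0 + integral {b..s} (\<lambda>r. G r (D r))"
    using ode_exists[OF H, of D0] by blast
  define D' where "D' s = (if s \<le> b then D0 else D s)" for s
  have eqI: "D' s = D s" if "s \<in> {b..\<rho>}" for s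
  proof (cases "s \<le> b")
    case True
    hence "s = b" using that by auto
    thus ?thesis using De that by (simp add: D'_def)
  qed (simp add: D'_def)
  have "(\<forall>s\<le>b. D' s = D0) \<and> continuous_on {b..\<rho>} D' \<and>
      (\<forall>s\<in>{b..\<rho>}. D' s = D0 + integral {b..s} (\<lambda>r. G r (D' r)))"
  proof (intro conjI ballI allI impI)
    show "continuous_on {b..\<rho>} D'" using Dc eqI by (metis continuous_on_cong)
    fix s assume s: "s \<in> {b..\<rho>}"
    have "integral {b..s} (\<lambda>r. G r (D' r)) = integral {b..s} (\<lambda>r. G r (D r))"
      using eqI s by (intro integral_cong) auto
    thus "D' s = D0 + integral {b..s} (\<lambda>r. G r (D' r))" using De s eqI by auto
  qed (simp add: D'_def)
  thus ?thesis unfolding solve_def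
    by (rule someI[where P="\<lambda>D. (\<forall>s\<le>b. D s = D0) \<and> continuous_on {b..\<rho>} D \<and>
      (\<forall>s\<in>{b..\<rho>}. D s = D0 + integral {b..s} (\<lambda>r. G r (D r)))"])
qed

lemma meas_comp3:
  fixes lamY :: "real^'d \<Rightarrow> real \<Rightarrow> 'a::polish_space \<Rightarrow> real"
  assumes meas_lamY: "(\<lambda>(z, v, a). lamY z v a) \<in> borel_measurable borel"
    and xf: "continuous_on I xf" and yf: "continuous_on I yf"
    and af: "af \<in> restrict_space borel I \<rightarrow>\<^sub>M borel"
  shows "(\<lambda>r. lamY (xf r) (yf r) (af r)) \<in> borel_measurable (restrict_space borel I)"
proof -
  have m1: "xf \<in> borel_measurable (restrict_space borel I)"
    by (rule borel_measurable_continuous_on_restrict[OF xf])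
  have m2: "yf \<in> borel_measurable (restrict_space borel I)"
    by (rule borel_measurable_continuous_on_restrict[OF yf])
  have m3: "(\<lambda>r. (yf r, af r)) \<in> borel_measurable (restrict_space borel I)"
    by (rule borel_measurable_Pair[OF m2 af])
  have "(\<lambda>r. (xf r, yf r, af r)) \<in> borel_measurable (restrict_space borel I)"
    by (rule borel_measurable_Pair[OF m1 m3])
  from measurable_compose[OF this meas_lamY] show ?thesis by simp
qed

lemma cont_eq:
  fixes f :: "real \<Rightarrow> 'v::euclidean_space"
  assumes fi: "set_integrable lborel {b..\<rho>} f" and h: "continuous_on {b..\<rho>} h"
    and z: "\<forall>s\<in>{b..\<rho>}. z s = c + set_lebesgue_integral lborel {b..s} f + h s"
  shows "continuous_on {b..\<rho>} z"
proof -
  have eq: "z s = c + integral {b..s} f + h s" if s: "s \<in> {b..\<rho>}" for s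
  proof -
    have "set_integrable lborel {b..s} f" using s by (intro set_integrable_subset[OF fi]) auto
    hence "set_lebesgue_integral lborel {b..s} f = integral {b..s} f"
      by (rule set_borel_integral_eq_integral(2))
    moreover have "z s = c + set_lebesgue_integral lborel {b..s} f + h s" using z s by blast
    ultimately show ?thesis by simp
  qed
  have c1: "continuous_on {b..\<rho>} (\<lambda>s. integral {b..s} f)"
    by (rule indefinite_integral_continuous_1[OF set_borel_integral_eq_integral(1)[OF fi]])
  have c2: "continuous_on {b..\<rho>} (\<lambda>s. c + integral {b..s} f + h s)"
    by (intro continuous_on_add continuous_on_const c1 h)
  have "continuous_on {b..\<rho>} z = continuous_on {b..\<rho>} (\<lambda>s. c + integral {b..s} f + h s)"
    by (rule continuous_on_cong[OF refl eq])
  thus ?thesis using c2 by simp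
qed

lemma prog_section:
  assumes p: "progressive F T a" and T: "T \<ge> 0" and w: "\<omega> \<in> space (F T)"
    and I: "I \<subseteq> {0..T}"
  shows "(\<lambda>s. a s \<omega>) \<in> restrict_space borel I \<rightarrow>\<^sub>M borel"
proof -
  have "(\<lambda>(s, \<omega>). a s \<omega>) \<in> borel_measurable (restrict_space borel {0..T} \<Otimes>\<^sub>M F T)"
    using p T unfolding progressive_def by auto
  from measurable_Pair1[OF this w] have "(\<lambda>s. a s \<omega>) \<in> restrict_space borel {0..T} \<rightarrow>\<^sub>M borel"
    by simp
  thus ?thesis by (rule measurable_restrict_mono[OF _ I])
qed



definition itos :: "'w measure \<Rightarrow> (real \<Rightarrow> 'w measure) \<Rightarrow> real \<Rightarrow> (label \<Rightarrow> real \<Rightarrow> 'w \<Rightarrow> real^'m)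
   \<Rightarrow> (label \<Rightarrow> 'w \<Rightarrow> (real \<times> nat) set) \<Rightarrow> (real^'d \<Rightarrow> 'a \<Rightarrow> real^'m^'d) \<Rightarrow> (real^'d \<Rightarrow> 'a \<Rightarrow> real^'m)
   \<Rightarrow> (label \<Rightarrow> real \<Rightarrow> 'w \<Rightarrow> 'a) \<Rightarrow> real \<Rightarrow> label set \<Rightarrow> (label \<Rightarrow> real \<Rightarrow> 'w \<Rightarrow> real^'d) \<Rightarrow> label
   \<Rightarrow> ('d \<Rightarrow> 'm \<Rightarrow> real \<Rightarrow> 'w \<Rightarrow> real) \<Rightarrow> ('m \<Rightarrow> real \<Rightarrow> 'w \<Rightarrow> real) \<Rightarrow> bool" where
  "itos M F T B Q sig sigY \<alpha> t V X i I J \<longleftrightarrow>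
        (\<forall>j k. is_ito M F T (\<lambda>s \<omega>. B i s \<omega> $ k)
           (\<lambda>r \<omega>. if active V t T (\<lambda>l. Q l \<omega>) i r then sig (X i r \<omega>) (\<alpha> i r \<omega>) $ j $ k else 0) (I j k)) \<and>
        (\<forall>k. is_ito M F T (\<lambda>s \<omega>. B i s \<omega> $ k)
           (\<lambda>r \<omega>. if active V t T (\<lambda>l. Q l \<omega>) i r then sigY (X i r \<omega>) (\<alpha> i r \<omega>) $ k else 0) (J k))"

definition eqs :: "real \<Rightarrow> (label \<Rightarrow> 'w \<Rightarrow> (real \<times> nat) set) \<Rightarrow> (real^'d \<Rightarrow> 'a \<Rightarrow> real^'d)
   \<Rightarrow> (real^'d \<Rightarrow> real \<Rightarrow> 'a \<Rightarrow> real) \<Rightarrow> (label \<Rightarrow> real \<Rightarrow> 'w \<Rightarrow> 'a) \<Rightarrow> real \<Rightarrow> label set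
   \<Rightarrow> (label \<Rightarrow> real \<Rightarrow> 'w \<Rightarrow> real^'d) \<Rightarrow> (label \<Rightarrow> real \<Rightarrow> 'w \<Rightarrow> real) \<Rightarrow> label
   \<Rightarrow> ('d \<Rightarrow> 'm \<Rightarrow> real \<Rightarrow> 'w \<Rightarrow> real) \<Rightarrow> ('m \<Rightarrow> real \<Rightarrow> 'w \<Rightarrow> real) \<Rightarrow> 'w \<Rightarrow> bool" where
  "eqs T Q lam lamY \<alpha> t V X Y i I J \<omega> \<longleftrightarrow>
     (\<forall>b. birth V t T (\<lambda>l. Q l \<omega>) i = Some b \<longrightarrow>
           (let \<rho> = stop_time V t T (\<lambda>l. Q l \<omega>) i in
            set_integrable lborel {b..\<rho>} (\<lambda>r. lam (X i r \<omega>) (\<alpha> i r \<omega>)) \<and>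
            set_integrable lborel {b..\<rho>} (\<lambda>r. lamY (X i r \<omega>) (Y i r \<omega>) (\<alpha> i r \<omega>)) \<and>
            (\<forall>s\<in>{b..\<rho>}.
               X i s \<omega> = X i b \<omega> + set_lebesgue_integral lborel {b..s} (\<lambda>r. lam (X i r \<omega>) (\<alpha> i r \<omega>))
                  + (\<chi> j. \<Sum>k\<in>UNIV. I j k s \<omega> - I j k b \<omega>) \<and>
               Y i s \<omega> = Y i b \<omega> + set_lebesgue_integral lborel {b..s} (\<lambda>r. lamY (X i r \<omega>) (Y i r \<omega>) (\<alpha> i r \<omega>))
                  + (\<Sum>k\<in>UNIV. J k s \<omega> - J k b \<omega>))))"

lemma bsol_alt:
  "branching_sol M F T B Q lam sig lamY sigY \<alpha> t V x y X Y \<longleftrightarrow>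
     (AE \<omega> in M. \<forall>i\<in>V. \<forall>s\<in>{0..t}. X i s \<omega> = x i \<and> Y i s \<omega> = y) \<and>
     (AE \<omega> in M. \<forall>i c b. i @ [c] \<notin> V \<longrightarrow> birth V t T (\<lambda>j. Q j \<omega>) (i @ [c]) = Some b \<longrightarrow>
         X (i @ [c]) b \<omega> = X i b \<omega> \<and> Y (i @ [c]) b \<omega> = Y i b \<omega>) \<and>
     (\<forall>i. \<exists>I J. itos M F T B Q sig sigY \<alpha> t V X i I J \<and> (AE \<omega> in M. eqs T Q lam lamY \<alpha> t V X Y i I J \<omega>))"
  unfolding branching_sol_def itos_def eqs_def by simp

lemma ito_cont: "is_ito M F T W H I \<Longrightarrow> AE \<omega> in M. continuous_on {0..T} (\<lambda>s. I s \<omega>)"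
  by (simp add: is_ito_def)


lemma shift:
  fixes M :: "'w measure" and F :: "real \<Rightarrow> 'w measure" and T :: real
    and B :: "label \<Rightarrow> real \<Rightarrow> 'w \<Rightarrow> real^'m"
    and Q :: "label \<Rightarrow> 'w \<Rightarrow> (real \<times> nat) set"
    and lam :: "real^'d \<Rightarrow> 'a::polish_space \<Rightarrow> real^'d"
    and sig :: "real^'d \<Rightarrow> 'a \<Rightarrow> real^'m^'d"
    and lamY :: "real^'d \<Rightarrow> real \<Rightarrow> 'a \<Rightarrow> real"
    and sigY :: "real^'d \<Rightarrow> 'a \<Rightarrow> real^'m"
    and \<alpha> :: "label \<Rightarrow> real \<Rightarrow> 'w \<Rightarrow> 'a"
    and X :: "label \<Rightarrow> real \<Rightarrow> 'w \<Rightarrow> real^'d" and Y :: "label \<Rightarrow> real \<Rightarrow> 'w \<Rightarrow> real"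
  assumes space: "complete_filtered_ps M F"
    and meas_lamY: "(\<lambda>(z, v, a). lamY z v a) \<in> borel_measurable borel"
    and Lip: "\<forall>z v v' a. \<bar>lamY z v a - lamY z v' a\<bar> \<le> L * \<bar>v - v'\<bar>" and L: "L > 0"
    and t_in: "t \<in> {0..T}"
    and fin: "AE \<omega> in M. \<forall>l. finite (Q l \<omega>)"
    and prog: "\<forall>i. progressive F T (\<alpha> i)"
    and sol: "branching_sol M F T B Q lam sig lamY sigY \<alpha> t V x y1 X Y"
  shows "\<exists>Y2. branching_sol M F T B Q lam sig lamY sigY \<alpha> t V x y2 X Y2 \<and>
     (y2 \<le> y1 \<longrightarrow> (AE \<omega> in M. \<forall>i. alive_T V t T (\<lambda>l. Q l \<omega>) i \<longrightarrow> Y2 i T \<omega> \<le> Y i T \<omega>))"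
proof -
  have T0: "T \<ge> 0" using t_in by auto
  have spF: "space (F T) = space M" using space unfolding complete_filtered_ps_def by auto
  note sd = sol[unfolded bsol_alt]
  have S1: "AE \<omega> in M. \<forall>i\<in>V. \<forall>s\<in>{0..t}. X i s \<omega> = x i \<and> Y i s \<omega> = y1"
    by (rule conjunct1[OF sd])
  have S2: "AE \<omega> in M. \<forall>i c b. i @ [c] \<notin> V \<longrightarrow> birth V t T (\<lambda>j. Q j \<omega>) (i @ [c]) = Some b \<longrightarrow>
         X (i @ [c]) b \<omega> = X i b \<omega> \<and> Y (i @ [c]) b \<omega> = Y i b \<omega>"
    by (rule conjunct1[OF conjunct2[OF sd]])
  have S3: "\<forall>i. \<exists>I J. itos M F T B Q sig sigY \<alpha> t V X i I J \<and> (AE \<omega> in M. eqs T Q lam lamY \<alpha> t V X Y i I J \<omega>)"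
    by (rule conjunct2[OF conjunct2[OF sd]])
  have "\<forall>i. \<exists>IJ. itos M F T B Q sig sigY \<alpha> t V X i (fst IJ) (snd IJ) \<and>
      (AE \<omega> in M. eqs T Q lam lamY \<alpha> t V X Y i (fst IJ) (snd IJ) \<omega>)"
  proof
    fix i
    from S3 obtain I J where "itos M F T B Q sig sigY \<alpha> t V X i I J \<and> (AE \<omega> in M. eqs T Q lam lamY \<alpha> t V X Y i I J \<omega>)"
      by blast
    thus "\<exists>IJ. itos M F T B Q sig sigY \<alpha> t V X i (fst IJ) (snd IJ) \<and>
      (AE \<omega> in M. eqs T Q lam lamY \<alpha> t V X Y i (fst IJ) (snd IJ) \<omega>)"
      by (intro exI[of _ "(I, J)"]) simp
  qed
  from choice[OF this] obtain fIJ where fIJ: "\<forall>i. itos M F T B Q sig sigY \<alpha> t V X i (fst (fIJ i)) (snd (fIJ i)) \<and>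
      (AE \<omega> in M. eqs T Q lam lamY \<alpha> t V X Y i (fst (fIJ i)) (snd (fIJ i)) \<omega>)" by blast
  define II where "II i = fst (fIJ i)" for i
  define JJ where "JJ i = snd (fIJ i)" for i
  have IJ: "\<And>i. itos M F T B Q sig sigY \<alpha> t V X i (II i) (JJ i)"
      "\<And>i. AE \<omega> in M. eqs T Q lam lamY \<alpha> t V X Y i (II i) (JJ i) \<omega>"
    using fIJ unfolding II_def JJ_def by auto
  have cI: "AE \<omega> in M. \<forall>i j k. continuous_on {0..T} (\<lambda>s. II i j k s \<omega>)"
  proof (subst AE_all_countable, rule allI)+
    fix i j k
    show "AE \<omega> in M. continuous_on {0..T} (\<lambda>s. II i j k s \<omega>)"
      using IJ(1)[of i] unfolding itos_def by (blast intro: ito_cont)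
  qed
  have cJ: "AE \<omega> in M. \<forall>i k. continuous_on {0..T} (\<lambda>s. JJ i k s \<omega>)"
  proof (subst AE_all_countable, rule allI)+
    fix i k
    show "AE \<omega> in M. continuous_on {0..T} (\<lambda>s. JJ i k s \<omega>)"
      using IJ(1)[of i] unfolding itos_def by (blast intro: ito_cont)
  qed
  have cE: "AE \<omega> in M. \<forall>i. eqs T Q lam lamY \<alpha> t V X Y i (II i) (JJ i) \<omega>"
    using IJ(2) by (subst AE_all_countable) blast
  define good where "good \<omega> \<longleftrightarrow> \<omega> \<in> space M \<and> (\<forall>l. finite (Q l \<omega>)) \<and>
      (\<forall>i j k. continuous_on {0..T} (\<lambda>s. II i j k s \<omega>)) \<and> (\<forall>i k. continuous_on {0..T} (\<lambda>s. JJ i k s \<omega>)) \<and>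
      (\<forall>i. eqs T Q lam lamY \<alpha> t V X Y i (II i) (JJ i) \<omega>)" for \<omega>
  have AEgood: "AE \<omega> in M. good \<omega>"
    using AE_space fin cI cJ cE unfolding good_def by eventually_elim auto
  define bt where "bt i \<omega> = (case birth V t T (\<lambda>l. Q l \<omega>) i of Some b \<Rightarrow> b | None \<Rightarrow> 0)" for i \<omega>
  define \<rho> where "\<rho> i \<omega> = stop_time V t T (\<lambda>l. Q l \<omega>) i" for i \<omega>
  define Gf where "Gf i \<omega> r v = lamY (X i r \<omega>) (Y i r \<omega> + v) (\<alpha> i r \<omega>) - lamY (X i r \<omega>) (Y i r \<omega>) (\<alpha> i r \<omega>)"
    for i \<omega> r v
  define D where "D i \<omega> = lrec (\<lambda>i d. solve d (Gf i \<omega>) (bt i \<omega>) (\<rho> i \<omega>))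
      (\<lambda>i. if i \<in> V then Some (y2 - y1) else None) (\<lambda>i. bt i \<omega>) (rev i)" for i \<omega>
  define Y2 where "Y2 i s \<omega> = Y i s \<omega> + D i \<omega> s" for i s \<omega>
  have D_V: "D i \<omega> = solve (y2 - y1) (Gf i \<omega>) (bt i \<omega>) (\<rho> i \<omega>)" if "i \<in> V" for i \<omega>
    unfolding D_def by (rule lrec_rev_st) (simp add: that)
  have D_snoc: "D (p @ [c]) \<omega> = solve (D p \<omega> (bt (p @ [c]) \<omega>)) (Gf (p @ [c]) \<omega>) (bt (p @ [c]) \<omega>) (\<rho> (p @ [c]) \<omega>)"
    if "p @ [c] \<notin> V" for p c \<omega>
    unfolding D_def by (simp only: lrec_rev_snoc) (simp add: that)
  have hyp: "ode_hyp (Gf i \<omega>) L b (\<rho> i \<omega>)" if g: "good \<omega>" and bi: "birth V t T (\<lambda>l. Q l \<omega>) i = Some b" for i \<omega> b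
  proof -
    have finq: "\<forall>l. finite (Q l \<omega>)" and wM: "\<omega> \<in> space M" using g unfolding good_def by auto
    have br: "0 \<le> b \<and> b \<le> T" using birth_range[OF t_in finq bi] .
    have sr: "b \<le> \<rho> i \<omega> \<and> \<rho> i \<omega> \<le> T" using stop_range[OF t_in finq bi] unfolding \<rho>_def .
    have sub: "{b..\<rho> i \<omega>} \<subseteq> {0..T}" using br sr by auto
    have E: "eqs T Q lam lamY \<alpha> t V X Y i (II i) (JJ i) \<omega>" using g unfolding good_def by auto
    have E1: "set_integrable lborel {b..\<rho> i \<omega>} (\<lambda>r. lam (X i r \<omega>) (\<alpha> i r \<omega>))"
      and E2: "set_integrable lborel {b..\<rho> i \<omega>} (\<lambda>r. lamY (X i r \<omega>) (Y i r \<omega>) (\<alpha> i r \<omega>))"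
      and E3: "\<forall>s\<in>{b..\<rho> i \<omega>}.
               X i s \<omega> = X i b \<omega> + set_lebesgue_integral lborel {b..s} (\<lambda>r. lam (X i r \<omega>) (\<alpha> i r \<omega>))
                  + (\<chi> j. \<Sum>k\<in>UNIV. II i j k s \<omega> - II i j k b \<omega>)"
      and E4: "\<forall>s\<in>{b..\<rho> i \<omega>}.
               Y i s \<omega> = Y i b \<omega> + set_lebesgue_integral lborel {b..s} (\<lambda>r. lamY (X i r \<omega>) (Y i r \<omega>) (\<alpha> i r \<omega>))
                  + (\<Sum>k\<in>UNIV. JJ i k s \<omega> - JJ i k b \<omega>)"
      using E bi unfolding eqs_def Let_def \<rho>_def by blast+
    have ci: "continuous_on {b..\<rho> i \<omega>} (\<lambda>s. II i j k s \<omega>)" for j k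
    proof -
      have "continuous_on {0..T} (\<lambda>s. II i j k s \<omega>)" using g unfolding good_def by blast
      thus ?thesis by (rule continuous_on_subset[OF _ sub])
    qed
    have cj: "continuous_on {b..\<rho> i \<omega>} (\<lambda>s. JJ i k s \<omega>)" for k
    proof -
      have "continuous_on {0..T} (\<lambda>s. JJ i k s \<omega>)" using g unfolding good_def by blast
      thus ?thesis by (rule continuous_on_subset[OF _ sub])
    qed
    have Xc: "continuous_on {b..\<rho> i \<omega>} (\<lambda>s. X i s \<omega>)"
    proof (rule cont_eq[OF E1 _ E3])
      show "continuous_on {b..\<rho> i \<omega>} (\<lambda>s. \<chi> j. \<Sum>k\<in>UNIV. II i j k s \<omega> - II i j k b \<omega>)"
        by (intro continuous_on_vec_lambda continuous_on_sum continuous_on_diff continuous_on_const ci)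
    qed
    have Yc: "continuous_on {b..\<rho> i \<omega>} (\<lambda>s. Y i s \<omega>)"
    proof (rule cont_eq[OF E2 _ E4])
      show "continuous_on {b..\<rho> i \<omega>} (\<lambda>s. \<Sum>k\<in>UNIV. JJ i k s \<omega> - JJ i k b \<omega>)"
        by (intro continuous_on_sum continuous_on_diff continuous_on_const cj)
    qed
    have am: "(\<lambda>s. \<alpha> i s \<omega>) \<in> restrict_space borel {b..\<rho> i \<omega>} \<rightarrow>\<^sub>M borel"
    proof -
      have "\<omega> \<in> space (F T)" using wM spF by simp
      thus ?thesis by (rule prog_section[OF prog[rule_format, of i] T0 _ sub])
    qed
    show ?thesis unfolding ode_hyp_def
    proof (intro conjI ballI allI impI)
      show "L > 0" by fact
      fix r v w
      show "\<bar>Gf i \<omega> r v - Gf i \<omega> r w\<bar> \<le> L * \<bar>v - w\<bar>"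
        using Lip[rule_format, of "X i r \<omega>" "Y i r \<omega> + v" "\<alpha> i r \<omega>" "Y i r \<omega> + w"]
        by (simp add: Gf_def)
    next
      fix r show "Gf i \<omega> r 0 = 0" by (simp add: Gf_def)
    next
      fix u :: "real \<Rightarrow> real" assume u: "continuous_on {b..\<rho> i \<omega>} u"
      have m1: "(\<lambda>r. lamY (X i r \<omega>) (Y i r \<omega> + u r) (\<alpha> i r \<omega>)) \<in> borel_measurable (restrict_space borel {b..\<rho> i \<omega>})"
        by (rule meas_comp3[OF meas_lamY Xc _ am]) (intro continuous_on_add Yc u)
      have m2: "(\<lambda>r. lamY (X i r \<omega>) (Y i r \<omega>) (\<alpha> i r \<omega>)) \<in> borel_measurable (restrict_space borel {b..\<rho> i \<omega>})"
        by (rule meas_comp3[OF meas_lamY Xc Yc am])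
      show "(\<lambda>r. Gf i \<omega> r (u r)) \<in> borel_measurable (restrict_space borel {b..\<rho> i \<omega>})"
        unfolding Gf_def using m1 m2 by (rule borel_measurable_diff)
    qed
  qed
  have spec: "\<exists>D0. (\<forall>s\<le>b. D i \<omega> s = D0) \<and> continuous_on {b..\<rho> i \<omega>} (D i \<omega>) \<and>
      (\<forall>s\<in>{b..\<rho> i \<omega>}. D i \<omega> s = D0 + integral {b..s} (\<lambda>r. Gf i \<omega> r (D i \<omega> r)))"
    if g: "good \<omega>" and bi: "birth V t T (\<lambda>l. Q l \<omega>) i = Some b" for i \<omega> b
  proof -
    have btb: "bt i \<omega> = b" using bi by (simp add: bt_def)
    have H: "ode_hyp (Gf i \<omega>) L (bt i \<omega>) (\<rho> i \<omega>)" using hyp[OF g bi] btb by simp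
    show ?thesis
    proof (cases "i \<in> V")
      case True
      show ?thesis using solve_spec[OF H, of "y2 - y1"] D_V[OF True, of \<omega>] btb by metis
    next
      case False
      show ?thesis
      proof (cases i rule: rev_cases)
        case Nil thus ?thesis using bi False by (simp add: birth_nil)
      next
        case (snoc p c)
        have "p @ [c] \<notin> V" using False snoc by simp
        from D_snoc[OF this, of \<omega>] show ?thesis
          using solve_spec[OF H, of "D p \<omega> (bt (p @ [c]) \<omega>)"] btb snoc by metis
      qed
    qed
  qed
  have sol2: "branching_sol M F T B Q lam sig lamY sigY \<alpha> t V x y2 X Y2"
    unfolding bsol_alt
  proof (intro conjI allI)
    show "AE \<omega> in M. \<forall>i\<in>V. \<forall>s\<in>{0..t}. X i s \<omega> = x i \<and> Y2 i s \<omega> = y2"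
      using AEgood S1
    proof eventually_elim
      case (elim \<omega>)
      show ?case
      proof (intro ballI)
        fix i s assume iV: "i \<in> V" and s: "s \<in> {0..t}"
        have bi: "birth V t T (\<lambda>l. Q l \<omega>) i = Some t" by (rule birth_V[OF iV])
        have btt: "bt i \<omega> = t" using bi by (simp add: bt_def)
        have H: "ode_hyp (Gf i \<omega>) L (bt i \<omega>) (\<rho> i \<omega>)" using hyp[OF elim(1) bi] btt by simp
        have ss: "\<forall>s\<le>bt i \<omega>. solve (y2 - y1) (Gf i \<omega>) (bt i \<omega>) (\<rho> i \<omega>) s = y2 - y1"
          using solve_spec[OF H, of "y2 - y1"] by blast
        have "s \<le> bt i \<omega>" using s btt by simp
        hence "D i \<omega> s = y2 - y1" using ss D_V[OF iV, of \<omega>] by simp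
        thus "X i s \<omega> = x i \<and> Y2 i s \<omega> = y2" using elim(2) iV s by (simp add: Y2_def)
      qed
    qed
  next
    show "AE \<omega> in M. \<forall>i c b. i @ [c] \<notin> V \<longrightarrow> birth V t T (\<lambda>j. Q j \<omega>) (i @ [c]) = Some b \<longrightarrow>
         X (i @ [c]) b \<omega> = X i b \<omega> \<and> Y2 (i @ [c]) b \<omega> = Y2 i b \<omega>"
      using AEgood S2
    proof eventually_elim
      case (elim \<omega>)
      show ?case
      proof (intro allI impI)
        fix i c b assume nV: "i @ [c] \<notin> V" and bi: "birth V t T (\<lambda>j. Q j \<omega>) (i @ [c]) = Some b"
        have btb: "bt (i @ [c]) \<omega> = b" using bi by (simp add: bt_def)
        have H: "ode_hyp (Gf (i @ [c]) \<omega>) L (bt (i @ [c]) \<omega>) (\<rho> (i @ [c]) \<omega>)"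
          using hyp[OF elim(1) bi] btb by simp
        have ss: "\<forall>s\<le>bt (i @ [c]) \<omega>. solve (D i \<omega> (bt (i @ [c]) \<omega>)) (Gf (i @ [c]) \<omega>) (bt (i @ [c]) \<omega>) (\<rho> (i @ [c]) \<omega>) s = D i \<omega> (bt (i @ [c]) \<omega>)"
          using solve_spec[OF H, of "D i \<omega> (bt (i @ [c]) \<omega>)"] by blast
        have "D (i @ [c]) \<omega> b = D i \<omega> b"
          using ss[rule_format, of b] D_snoc[OF nV, of \<omega>] btb by simp
        thus "X (i @ [c]) b \<omega> = X i b \<omega> \<and> Y2 (i @ [c]) b \<omega> = Y2 i b \<omega>"
          using elim(2) nV bi by (simp add: Y2_def)
      qed
    qed
  next
    fix i
    show "\<exists>I J. itos M F T B Q sig sigY \<alpha> t V X i I J \<and> (AE \<omega> in M. eqs T Q lam lamY \<alpha> t V X Y2 i I J \<omega>)"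
    proof (intro exI conjI)
      show "itos M F T B Q sig sigY \<alpha> t V X i (II i) (JJ i)" by (rule IJ(1))
      show "AE \<omega> in M. eqs T Q lam lamY \<alpha> t V X Y2 i (II i) (JJ i) \<omega>"
        using AEgood
      proof eventually_elim
        case (elim \<omega>)
        have E: "eqs T Q lam lamY \<alpha> t V X Y i (II i) (JJ i) \<omega>" using elim unfolding good_def by auto
        show ?case unfolding eqs_def Let_def
        proof (intro allI impI)
          fix b assume bi: "birth V t T (\<lambda>l. Q l \<omega>) i = Some b"
          let ?\<rho> = "stop_time V t T (\<lambda>l. Q l \<omega>) i"
          have E1: "set_integrable lborel {b..?\<rho>} (\<lambda>r. lam (X i r \<omega>) (\<alpha> i r \<omega>))"
            and E2: "set_integrable lborel {b..?\<rho>} (\<lambda>r. lamY (X i r \<omega>) (Y i r \<omega>) (\<alpha> i r \<omega>))"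
            and E3: "\<forall>s\<in>{b..?\<rho>}.
                 X i s \<omega> = X i b \<omega> + set_lebesgue_integral lborel {b..s} (\<lambda>r. lam (X i r \<omega>) (\<alpha> i r \<omega>))
                    + (\<chi> j. \<Sum>k\<in>UNIV. II i j k s \<omega> - II i j k b \<omega>)"
            and E4: "\<forall>s\<in>{b..?\<rho>}.
                 Y i s \<omega> = Y i b \<omega> + set_lebesgue_integral lborel {b..s} (\<lambda>r. lamY (X i r \<omega>) (Y i r \<omega>) (\<alpha> i r \<omega>))
                    + (\<Sum>k\<in>UNIV. JJ i k s \<omega> - JJ i k b \<omega>)"
            using E bi unfolding eqs_def Let_def by blast+
          obtain D0 where D0: "\<forall>s\<le>b. D i \<omega> s = D0" and Dc: "continuous_on {b..\<rho> i \<omega>} (D i \<omega>)"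
            and De: "\<forall>s\<in>{b..\<rho> i \<omega>}. D i \<omega> s = D0 + integral {b..s} (\<lambda>r. Gf i \<omega> r (D i \<omega> r))"
            using spec[OF elim bi] by blast
          have H: "ode_hyp (Gf i \<omega>) L b (\<rho> i \<omega>)" by (rule hyp[OF elim bi])
          have gi: "set_integrable lborel {b..?\<rho>} (\<lambda>r. Gf i \<omega> r (D i \<omega> r))"
            using ode_int[OF H Dc] by (simp add: \<rho>_def)
          have feq: "(\<lambda>r. lamY (X i r \<omega>) (Y2 i r \<omega>) (\<alpha> i r \<omega>))
              = (\<lambda>r. lamY (X i r \<omega>) (Y i r \<omega>) (\<alpha> i r \<omega>) + Gf i \<omega> r (D i \<omega> r))"
            by (simp add: Gf_def Y2_def)
          have I2: "set_integrable lborel {b..?\<rho>} (\<lambda>r. lamY (X i r \<omega>) (Y2 i r \<omega>) (\<alpha> i r \<omega>))"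
            unfolding feq by (rule set_integral_add(1)[OF E2 gi])
          show "set_integrable lborel {b..?\<rho>} (\<lambda>r. lam (X i r \<omega>) (\<alpha> i r \<omega>)) \<and>
            set_integrable lborel {b..?\<rho>} (\<lambda>r. lamY (X i r \<omega>) (Y2 i r \<omega>) (\<alpha> i r \<omega>)) \<and>
            (\<forall>s\<in>{b..?\<rho>}.
               X i s \<omega> = X i b \<omega> + set_lebesgue_integral lborel {b..s} (\<lambda>r. lam (X i r \<omega>) (\<alpha> i r \<omega>))
                  + (\<chi> j. \<Sum>k\<in>UNIV. II i j k s \<omega> - II i j k b \<omega>) \<and>
               Y2 i s \<omega> = Y2 i b \<omega> + set_lebesgue_integral lborel {b..s} (\<lambda>r. lamY (X i r \<omega>) (Y2 i r \<omega>) (\<alpha> i r \<omega>))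
                  + (\<Sum>k\<in>UNIV. JJ i k s \<omega> - JJ i k b \<omega>))"
          proof (intro conjI ballI E1 I2)
            fix s assume s: "s \<in> {b..?\<rho>}"
            show "X i s \<omega> = X i b \<omega> + set_lebesgue_integral lborel {b..s} (\<lambda>r. lam (X i r \<omega>) (\<alpha> i r \<omega>))
                  + (\<chi> j. \<Sum>k\<in>UNIV. II i j k s \<omega> - II i j k b \<omega>)" using E3 s by blast
            have sub: "{b..s} \<subseteq> {b..?\<rho>}" using s by auto
            have E2s: "set_integrable lborel {b..s} (\<lambda>r. lamY (X i r \<omega>) (Y i r \<omega>) (\<alpha> i r \<omega>))"
              by (rule set_integrable_subset[OF E2 _ sub]) simp
            have gis: "set_integrable lborel {b..s} (\<lambda>r. Gf i \<omega> r (D i \<omega> r))"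
              by (rule set_integrable_subset[OF gi _ sub]) simp
            have "set_lebesgue_integral lborel {b..s} (\<lambda>r. lamY (X i r \<omega>) (Y2 i r \<omega>) (\<alpha> i r \<omega>))
                = set_lebesgue_integral lborel {b..s} (\<lambda>r. lamY (X i r \<omega>) (Y i r \<omega>) (\<alpha> i r \<omega>))
                  + set_lebesgue_integral lborel {b..s} (\<lambda>r. Gf i \<omega> r (D i \<omega> r))"
              unfolding feq by (rule set_integral_add(2)[OF E2s gis])
            also have "set_lebesgue_integral lborel {b..s} (\<lambda>r. Gf i \<omega> r (D i \<omega> r))
                = integral {b..s} (\<lambda>r. Gf i \<omega> r (D i \<omega> r))"
              by (rule set_borel_integral_eq_integral(2)[OF gis])
            finally have ieq: "set_lebesgue_integral lborel {b..s} (\<lambda>r. lamY (X i r \<omega>) (Y2 i r \<omega>) (\<alpha> i r \<omega>))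
                = set_lebesgue_integral lborel {b..s} (\<lambda>r. lamY (X i r \<omega>) (Y i r \<omega>) (\<alpha> i r \<omega>))
                  + integral {b..s} (\<lambda>r. Gf i \<omega> r (D i \<omega> r))" .
            have Ds: "D i \<omega> s = D0 + integral {b..s} (\<lambda>r. Gf i \<omega> r (D i \<omega> r))"
              using De s by (simp add: \<rho>_def)
            have Db: "D i \<omega> b = D0" using D0 by simp
            have Ys: "Y i s \<omega> = Y i b \<omega> + set_lebesgue_integral lborel {b..s} (\<lambda>r. lamY (X i r \<omega>) (Y i r \<omega>) (\<alpha> i r \<omega>))
                    + (\<Sum>k\<in>UNIV. JJ i k s \<omega> - JJ i k b \<omega>)" using E4 s by blast
            show "Y2 i s \<omega> = Y2 i b \<omega> + set_lebesgue_integral lborel {b..s} (\<lambda>r. lamY (X i r \<omega>) (Y2 i r \<omega>) (\<alpha> i r \<omega>))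
                  + (\<Sum>k\<in>UNIV. JJ i k s \<omega> - JJ i k b \<omega>)"
              unfolding ieq using Ys Ds Db by (simp add: Y2_def)
          qed
        qed
      qed
    qed
  qed
  have cmp: "y2 \<le> y1 \<longrightarrow> (AE \<omega> in M. \<forall>i. alive_T V t T (\<lambda>l. Q l \<omega>) i \<longrightarrow> Y2 i T \<omega> \<le> Y i T \<omega>)"
  proof
    assume y21: "y2 \<le> y1"
    show "AE \<omega> in M. \<forall>i. alive_T V t T (\<lambda>l. Q l \<omega>) i \<longrightarrow> Y2 i T \<omega> \<le> Y i T \<omega>"
      using AEgood
    proof eventually_elim
      case (elim \<omega>)
      have finq: "\<forall>l. finite (Q l \<omega>)" using elim unfolding good_def by auto
      have np: "\<forall>b. birth V t T (\<lambda>l. Q l \<omega>) i = Some b \<longrightarrow> (\<forall>s\<in>{b..\<rho> i \<omega>}. D i \<omega> s \<le> 0)" for i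
      proof (induction i rule: rev_induct)
        case Nil
        show ?case
        proof (intro allI impI)
          fix b assume bi: "birth V t T (\<lambda>l. Q l \<omega>) [] = Some b"
          hence iV: "[] \<in> V" and bt: "b = t" by (auto simp: birth_nil split: if_splits)
          have btt: "bt [] \<omega> = b" using bi by (simp add: bt_def)
          have H: "ode_hyp (Gf [] \<omega>) L (bt [] \<omega>) (\<rho> [] \<omega>)" using hyp[OF elim bi] btt by simp
          note ss = solve_spec[OF H, of "y2 - y1"]
          show "\<forall>s\<in>{b..\<rho> [] \<omega>}. D [] \<omega> s \<le> 0"
            using ode_nonpos[OF H, of "D [] \<omega>" "y2 - y1"] ss D_V[OF iV, of \<omega>] btt y21 by auto
        qed
      next
        case (snoc c p)
        show ?case
        proof (intro allI impI)
          fix b assume bi: "birth V t T (\<lambda>l. Q l \<omega>) (p @ [c]) = Some b"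
          have btt: "bt (p @ [c]) \<omega> = b" using bi by (simp add: bt_def)
          have H: "ode_hyp (Gf (p @ [c]) \<omega>) L (bt (p @ [c]) \<omega>) (\<rho> (p @ [c]) \<omega>)" using hyp[OF elim bi] btt by simp
          show "\<forall>s\<in>{b..\<rho> (p @ [c]) \<omega>}. D (p @ [c]) \<omega> s \<le> 0"
          proof (cases "p @ [c] \<in> V")
            case True
            note ss = solve_spec[OF H, of "y2 - y1"]
            show ?thesis
              using ode_nonpos[OF H, of "D (p @ [c]) \<omega>" "y2 - y1"] ss D_V[OF True, of \<omega>] btt y21 by auto
          next
            case False
            then obtain b' \<tau> k where b': "birth V t T (\<lambda>l. Q l \<omega>) p = Some b'"
              and fa: "first_atom (Q p \<omega>) b' T = Some (\<tau>, k)" and bt: "b = \<tau>"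
              using bi by (auto simp: birth_snoc split: option.splits if_splits)
            have "b' < \<tau>" using first_atom_props[OF _ fa] finq by auto
            moreover have "\<rho> p \<omega> = \<tau>" using b' fa by (simp add: \<rho>_def stop_time_def)
            ultimately have "D p \<omega> \<tau> \<le> 0" using snoc.IH b' by auto
            hence d0: "D p \<omega> (bt (p @ [c]) \<omega>) \<le> 0" using btt bt by simp
            note ss = solve_spec[OF H, of "D p \<omega> (bt (p @ [c]) \<omega>)"]
            show ?thesis
              using ode_nonpos[OF H, of "D (p @ [c]) \<omega>" "D p \<omega> (bt (p @ [c]) \<omega>)"] ss D_snoc[OF False, of \<omega>] btt d0
              by auto
          qed
        qed
      qed
      show ?case
      proof (intro allI impI)
        fix i assume "alive_T V t T (\<lambda>l. Q l \<omega>) i"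
        then obtain b where bi: "birth V t T (\<lambda>l. Q l \<omega>) i = Some b"
          and fa: "first_atom (Q i \<omega>) b T = None" unfolding alive_T_def by auto
        have "\<rho> i \<omega> = T" using bi fa by (simp add: \<rho>_def stop_time_def)
        moreover have "b \<le> T" using birth_range[OF t_in finq bi] by simp
        ultimately have "D i \<omega> T \<le> 0" using np[of i] bi by auto
        thus "Y2 i T \<omega> \<le> Y i T \<omega>" by (simp add: Y2_def)
      qed
    qed
  qed
  show ?thesis using sol2 cmp by blast
qed


theorem proposition2p3:
  fixes M :: "'w measure" and F :: "real \<Rightarrow> 'w measure" and T :: real
    and B :: "label \<Rightarrow> real \<Rightarrow> 'w \<Rightarrow> real^'m"
    and Q :: "label \<Rightarrow> 'w \<Rightarrow> (real \<times> nat) set"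
    and \<gamma> :: real and p :: "nat \<Rightarrow> real"
    and lam :: "real^'d \<Rightarrow> 'a::polish_space \<Rightarrow> real^'d"
    and sig :: "real^'d \<Rightarrow> 'a \<Rightarrow> real^'m^'d"
    and lamY :: "real^'d \<Rightarrow> real \<Rightarrow> 'a \<Rightarrow> real"
    and sigY :: "real^'d \<Rightarrow> 'a \<Rightarrow> real^'m"
    and g :: "label \<Rightarrow> real^'d \<Rightarrow> real"
    and t :: real and V :: "label set" and x :: "label \<Rightarrow> real^'d" and y :: real
  assumes space: "complete_filtered_ps M F"
    and BM: "\<And>i. brownian M F T (B i)"
    and PRM: "\<And>i. poisson_rm M F T \<gamma> p (Q i)"
    and indep: "mutually_indep M T B Q"
    and gamma_pos: "\<gamma> > 0" and p_nonneg: "\<And>k. p k \<ge> 0" and p_sum: "p sums 1"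
    and A_bounded: "bounded (UNIV :: 'a set)"
    and meas_lam: "(\<lambda>(z, a). lam z a) \<in> borel_measurable borel"
    and meas_sig: "(\<lambda>(z, a). sig z a) \<in> borel_measurable borel"
    and meas_lamY: "(\<lambda>(z, v, a). lamY z v a) \<in> borel_measurable borel"
    and meas_sigY: "(\<lambda>(z, a). sigY z a) \<in> borel_measurable borel"
    and H0_i: "summable (\<lambda>k. real k * p k)"
    and H0_ii: "\<exists>C. \<forall>a. norm (lam 0 a) + norm (sig 0 a) + \<bar>lamY 0 0 a\<bar> + norm (sigY 0 a) \<le> C"
    and H0_iii: "\<exists>L. \<forall>z z' v v' a.
        norm (lam z a - lam z' a) + norm (sig z a - sig z' a) + \<bar>lamY z v a - lamY z' v' a\<bar>
          + norm (sigY z a - sigY z' a) \<le> L * (norm (z - z') + \<bar>v - v'\<bar>)"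
    and H0_iv: "\<exists>w::real \<Rightarrow> real. mono w \<and> (w \<longlongrightarrow> 0) (at_right 0) \<and>
        (\<forall>z v a a'. norm (lam z a - lam z a') + norm (sig z a - sig z a') + \<bar>lamY z v a - lamY z v a'\<bar>
          + norm (sigY z a - sigY z a') \<le> w (dist a a'))"
    and t_in: "t \<in> {0..T}"
    and mu_E: "in_E V"
    and y_reach: "y \<in> reach M F T B Q lam sig lamY sigY g t V x"
  shows "{y..} \<subseteq> reach M F T B Q lam sig lamY sigY g t V x"
proof
  fix y' assume "y' \<in> {y..}"
  hence yy: "y \<le> y'" by simp
  obtain \<alpha> where prog: "\<forall>i. progressive F T (\<alpha> i)"
    and ex: "\<exists>X Y. branching_sol M F T B Q lam sig lamY sigY \<alpha> t V x y X Y"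
    and all: "\<forall>X Y. branching_sol M F T B Q lam sig lamY sigY \<alpha> t V x y X Y \<longrightarrow>
        (AE \<omega> in M. \<forall>i. alive_T V t T (\<lambda>l. Q l \<omega>) i \<longrightarrow> g i (X i T \<omega>) \<le> Y i T \<omega>)"
    using y_reach unfolding reach_def by blast
  obtain L0 where L0: "\<forall>z z' v v' a.
        norm (lam z a - lam z' a) + norm (sig z a - sig z' a) + \<bar>lamY z v a - lamY z' v' a\<bar>
          + norm (sigY z a - sigY z' a) \<le> L0 * (norm (z - z') + \<bar>v - v'\<bar>)"
    using H0_iii by blast
  define L1 where "L1 = \<bar>L0\<bar> + 1"
  have L1: "L1 > 0" by (simp add: L1_def)
  have Lip: "\<forall>z v v' a. \<bar>lamY z v a - lamY z v' a\<bar> \<le> L1 * \<bar>v - v'\<bar>"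
  proof (intro allI)
    fix z v v' a
    have "\<bar>lamY z v a - lamY z v' a\<bar> \<le> L0 * (norm (z - z) + \<bar>v - v'\<bar>)"
      using L0[rule_format, of z a z v v'] by simp
    also have "\<dots> = L0 * \<bar>v - v'\<bar>" by simp
    also have "\<dots> \<le> L1 * \<bar>v - v'\<bar>" unfolding L1_def
      by (intro mult_right_mono) auto
    finally show "\<bar>lamY z v a - lamY z v' a\<bar> \<le> L1 * \<bar>v - v'\<bar>" .
  qed
  have fin: "AE \<omega> in M. \<forall>l. finite (Q l \<omega>)"
  proof (subst AE_all_countable, rule allI)
    fix l
    have "AE \<omega> in M. finite (Q l \<omega>) \<and> Q l \<omega> \<subseteq> {0..T} \<times> UNIV"
      using PRM[of l] unfolding poisson_rm_def by blast
    thus "AE \<omega> in M. finite (Q l \<omega>)" by (rule AE_mp) auto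
  qed
  obtain X Y where sol: "branching_sol M F T B Q lam sig lamY sigY \<alpha> t V x y X Y" using ex by blast
  obtain Y2 where sol2: "branching_sol M F T B Q lam sig lamY sigY \<alpha> t V x y' X Y2"
    using shift[OF space meas_lamY Lip L1 t_in fin prog sol, of y'] by blast
  have allc: "\<forall>X Y. branching_sol M F T B Q lam sig lamY sigY \<alpha> t V x y' X Y \<longrightarrow>
        (AE \<omega> in M. \<forall>i. alive_T V t T (\<lambda>l. Q l \<omega>) i \<longrightarrow> g i (X i T \<omega>) \<le> Y i T \<omega>)"
  proof (intro allI impI)
    fix X' Y' assume sol': "branching_sol M F T B Q lam sig lamY sigY \<alpha> t V x y' X' Y'"
    obtain Y'' where sol'': "branching_sol M F T B Q lam sig lamY sigY \<alpha> t V x y X' Y''"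
      and cmp: "y \<le> y' \<longrightarrow> (AE \<omega> in M. \<forall>i. alive_T V t T (\<lambda>l. Q l \<omega>) i \<longrightarrow> Y'' i T \<omega> \<le> Y' i T \<omega>)"
      using shift[OF space meas_lamY Lip L1 t_in fin prog sol', of y] by blast
    have c1: "AE \<omega> in M. \<forall>i. alive_T V t T (\<lambda>l. Q l \<omega>) i \<longrightarrow> Y'' i T \<omega> \<le> Y' i T \<omega>"
      using cmp yy by blast
    have c2: "AE \<omega> in M. \<forall>i. alive_T V t T (\<lambda>l. Q l \<omega>) i \<longrightarrow> g i (X' i T \<omega>) \<le> Y'' i T \<omega>"
      using all sol'' by blast
    show "AE \<omega> in M. \<forall>i. alive_T V t T (\<lambda>l. Q l \<omega>) i \<longrightarrow> g i (X' i T \<omega>) \<le> Y' i T \<omega>"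
      using c1 c2 by eventually_elim (meson order_trans)
  qed
  show "y' \<in> reach M F T B Q lam sig lamY sigY g t V x"
    unfolding reach_def using prog sol2 allc by blast
qed

end
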